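(* Setting. Fix integers $N,M,J\ge 1$, a time $t$, and dimensions $n_x,n_u,n,l$. The agent's predicted states obey $x_{t|t}=x_t$ (given) and $x_{k+1|t}=A_kx_{k|t}+B_ku_{k|t}+E_kw_{k|t}$ for $k=t,\dots,t+N-1$, with $x\in\mathbb{R}^{n_x}$, $u\in\mathbb{R}^{n_u}$, $w\in\mathbb{R}^{n_x}$. For $i=1,\dots,M$ the $i$-th obstacle's predicted states obey $o^i_{t|t}=o^i_t$ (given) and $o^i_{k+1|t}=T^i_ko^i_{k|t}+q^i_k+F^i_kn^i_{k|t}$; write $o_{k|t},n_{k|t}$ for the stacked vectors over $i$ and $T_k,F_k$ (block diagonal), $q_k$ (stacked) for the combined obstacle dynamics. Nominal obstacle states are $\bar o_{t|t}=o_t$, $\bar o_{k+1|t}=T_k\bar o_{k|t}+q_k$, with components $\bar o^i_{k|t}$. The inputs are given by the policy $$u_{k|t}=h_{k|t}+\sum_{l=t}^{k-1}M_{l,k|t}w_{l|t}+K_{k|t}(o_{k|t}-\bar o_{k|t}),\quad k=t,\dots,t+N-1,$$ with parameters $\boldsymbol\theta_t=(\{h_{k|t}\},\{M_{l,k|t}\},\{K_{k|t}\})$. Let $\bar x_{t|t}=x_t$, $\bar x_{k+1|t}=A_k\bar x_{k|t}+B_kh_{k|t}$ be the nominal (noise-free) agent trajectory. Let $\mathbf{w}_t=[w_{t|t}^\top\cdots w_{t+N-1|t}^\top]^\top$, $\mathbf{n}_t=[n_{t|t}^\top\cdots n_{t+N-1|t}^\top]^\top$, $\mathbf{v}_t=[w_{t|t}^\top\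 n_{t|t}^\top\cdots w_{t+N-1|t}^\top\ n_{t+N-1|t}^\top]^\top$, and let $\mathbf{P}$ be the permutation matrix with $[\mathbf{w}_t^\top\ \mathbf{n}_t^\top]^\top=\mathbf{P}\mathbf{v}_t$. Geometry and constraints: $\mathcal{K}\subset\mathbb{R}^l$ is a closed convex cone with non-empty interior and dual cone $\mathcal{K}^*$; $G,G^i\in\mathbb{R}^{l\times n}$, $g,g^i\in\mathbb{R}^l$; $R_k,R^i_k$ are given rotation matrices; $C\in\mathbb{R}^{n\times n_x}$, $c_t\in\mathbb{R}^n$; $F^x_j\in\mathbb{R}^{1\times n_x}$, $F^u_j\in\mathbb{R}^{1\times n_u}$, $f_j\in\mathbb{R}$ for $j=1,\dots,J$. Dual variables are $\lambda^i_{k|t},\nu^i_{k|t}\in\mathbb{R}^l$ for $k=t+1,\dots,t+N$, $i=1,\dots,M$. Say that the constraints (CA) and (XU) hold if (CA) for all $k\in\{t+1,\dots,t+N\}$, $i\in\{1,\dots,M\}$: $\lambda^i_{k|t},\nu^i_{k|t}\in\mathcal{K}^*$, $\|\lambda^{i\top}_{k|t}GR_k^\top\|_2\le1$, $\lambda^{i\top}_{k|t}GR_k^\top=-\nu^{i\top}_{k|t}G^iR_k^{i\top}$, and $\lambda^{i\top}_{k|t}\big(GR_k^\top(C(x_{k|t}-o^i_{k|t})+c_t)+g\big)<-\nu^{i\top}_{k|t}g^i$; (XU) for all $k\in\{t,\dots,t+N-1\}$, $j\in\{1,\dots,J\}$: $F^x_jx_{k+1|t}+F^u_ju_{k|t}\le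 f_j$. Define, for $k\in\{t,\dots,t+N\}$, $i$, $j$: $Y^i_{k|t}=-\lambda^{i\top}_{k|t}g-\nu^{i\top}_{k|t}g^i-\lambda^{i\top}_{k|t}GR_k^\top c_t-\lambda^{i\top}_{k|t}GR_k^\top C(\bar x_{k|t}-\bar o^i_{k|t})$; $Z^i_{k|t}$ the row vector such that $\lambda^{i\top}_{k|t}GR_k^\top C(x_{k|t}-o^i_{k|t})=\lambda^{i\top}_{k|t}GR_k^\top C(\bar x_{k|t}-\bar o^i_{k|t})+Z^i_{k|t}[\mathbf{w}_t^\top\ \mathbf{n}_t^\top]^\top$ for all noise values; $\bar Y^j_{k|t}=f_j-F^x_j\bar x_{k+1|t}-F^u_jh_{k|t}$; $\bar Z^j_{k|t}$ the row vector such that $F^x_jx_{k+1|t}+F^u_ju_{k|t}=F^x_j\bar x_{k+1|t}+F^u_jh_{k|t}+\bar Z^j_{k|t}[\mathbf{w}_t^\top\ \mathbf{n}_t^\top]^\top$ for all noise values. (These are affine in $\boldsymbol\theta_t$ for fixed duals, bilinear jointly.) Conclusions. 1) Let $\Gamma$ be non-singular, $\gamma>0$, $\mathbf{\Gamma}=I_N\otimes\Gamma$. Then for given $(\boldsymbol\theta_t,\{\lambda^i_{k|t}\},\{\nu^i_{k|t}\})$, (CA) and (XU) hold for every $\mathbf{v}_t$ with $\|\mathbf{\Gamma}\mathbf{v}_t\|_\infty\le\gamma$ (i.e. each $[w_{k|t}^\top\ n_{k|t}^\top]^\top\in\{d\mid\|\Gamma d\|_\infty\le\gamma\}$) if and only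 if for all $k\in\{t,\dots,t+N-1\}$, $i$, $j$: $\lambda^i_{k+1|t},\nu^i_{k+1|t}\in\mathcal{K}^*$, $\|\lambda^{i\top}_{k+1|t}GR_{k+1}^\top\|_2\le1$, $\lambda^{i\top}_{k+1|t}GR_{k+1}^\top=-\nu^{i\top}_{k+1|t}G^iR^{i\top}_{k+1}$, $Y^i_{k+1|t}>\gamma\|Z^i_{k+1|t}\mathbf{P}\mathbf{\Gamma}^{-1}\|_1$, and $\bar Y^j_{k|t}-\gamma\|\bar Z^j_{k|t}\mathbf{P}\mathbf{\Gamma}^{-1}\|_1\ge0$. 2) Let $\Sigma$ be a covariance matrix, $\mathbf{\Sigma}=I_N\otimes\Sigma$, $\epsilon\in(0,1)$, and suppose $\mathbf{v}_t\sim\mathcal{N}(0,\mathbf{\Sigma})$ (i.e. the $[w_{k|t}^\top\ n_{k|t}^\top]^\top$ are i.i.d. $\mathcal{N}(0,\Sigma)$). Set $\gamma_{ca}=\Phi^{-1}(1-\frac{\epsilon}{2NM})$, $\gamma_{xu}=\Phi^{-1}(1-\frac{\epsilon}{2NJ})$, where $\Phi^{-1}$ is the quantile function of the standard normal distribution. If for all $k\in\{t,\dots,t+N-1\}$, $i$, $j$: $\lambda^i_{k+1|t},\nu^i_{k+1|t}\in\mathcal{K}^*$, $\|\lambda^{i\top}_{k+1|t}GR_{k+1}^\top\|_2\le1$, $\lambda^{i\top}_{k+1|t}GR_{k+1}^\top=-\nu^{i\top}_{k+1|t}G^iR^{i\top}_{k+1}$, $Y^i_{k+1|t}>\gamma_{ca}\|Z^i_{k+1|t}\mathbf{P}\mathbf{\Sigma}^{1/2}\|_2$,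 and $\bar Y^j_{k|t}\ge\gamma_{xu}\|\bar Z^j_{k|t}\mathbf{P}\mathbf{\Sigma}^{1/2}\|_2$, then the probability that (CA) and (XU) both hold is at least $1-\epsilon$. 3) With $\mathbf{\Sigma}$, $\epsilon$ as in 2) but with $\gamma_{ca}=\sqrt{\frac{2NM-\epsilon}{\epsilon}}$, $\gamma_{xu}=\sqrt{\frac{2NJ-\epsilon}{\epsilon}}$: if the same conditions as in 2) hold, then for every probability distribution of $\mathbf{v}_t$ with $\mathbb{E}(\mathbf{v}_t)=0$ and $\mathbb{E}(\mathbf{v}_t\mathbf{v}_t^\top)=\mathbf{\Sigma}$, the probability that (CA) and (XU) both hold is at least $1-\epsilon$.
   Context: $\mathcal{K}^*=\{y\mid y^\top x\ge0\ \forall x\in\mathcal{K}\}$. $\mathbf{\Sigma}^{1/2}$ denotes the symmetric positive semidefinite square root. $\otimes$ is the Kronecker product. Here $\lambda^i_{k|t},\nu^i_{k|t}$ and the policy parameters are deterministic decision variables (not depending on the noise), while $x_{k|t},u_{k|t},o_{k|t}$ are the closed-loop predicted quantities, which are affine functions of the noise vector $\mathbf{v}_t$. In the paper, the sets described in parts 1), 2)–3) are called $\mathcal{F}_t(\mathbf{D1})$, $\mathcal{F}_t(\mathbf{D2})$, $\mathcal{F}_t(\mathbf{D3})$ (the latter two being inner-approximations of the chance-constrained feasible sets). *)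

theory Defs
  imports "HOL-Analysis.Analysis" "HOL-Probability.Probability"
begin

text \<open>Index types: 'x = state dimension n_x, 'u = input dimension n_u, 'n = output
dimension n (of C), 'l = cone dimension l, 'm = obstacle index set (M = CARD('m)),
'e = dimension of the noise n^i of a single obstacle.  The per-step noise vector
[w_k; n_k] lives in real^('x + 'm * 'e): the Inl-part is w_k, the Inr (i,_) part is n^i_k.\<close>

record ('x::finite, 'u::finite, 'm::finite, 'e::finite) dyn =
  dA  :: "nat \<Rightarrow> real^'x^'x"
  dB  :: "nat \<Rightarrow> real^'u^'x"
  dE  :: "nat \<Rightarrow> real^'x^'x"
  dT  :: "'m \<Rightarrow> nat \<Rightarrow> real^'x^'x"
  dq  :: "'m \<Rightarrow> nat \<Rightarrow> real^'x"
  dF  :: "'m \<Rightarrow> nat \<Rightarrow> real^'e^'x"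
  dx0 :: "real^'x"
  do0 :: "'m \<Rightarrow> real^'x"

text \<open>Policy parameters theta_t = ({h_k}, {M_{l,k}}, {K_k}).  K_k acts on the stacked
obstacle deviation, indexed by 'm * 'x.\<close>
record ('x::finite, 'u::finite, 'm::finite) policy =
  ph :: "nat \<Rightarrow> real^'u"
  pM :: "nat \<Rightarrow> nat \<Rightarrow> real^'x^'u"
  pK :: "nat \<Rightarrow> real^('m \<times> 'x)^'u"

record ('x::finite, 'n::finite, 'l::finite, 'm::finite) geo =
  gK  :: "(real^'l) set"
  gG  :: "real^'n^'l"
  gg  :: "real^'l"
  gGi :: "'m \<Rightarrow> real^'n^'l"
  ggi :: "'m \<Rightarrow> real^'l"
  gR  :: "nat \<Rightarrow> real^'n^'n"
  gRi :: "'m \<Rightarrow> nat \<Rightarrow> real^'n^'n"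
  gC  :: "real^'x^'n"
  gc  :: "real^'n"

definition dual_cone :: "'a::real_inner set \<Rightarrow> 'a set" where
  "dual_cone K = {y. \<forall>x\<in>K. 0 \<le> y \<bullet> x}"

definition wpart :: "real^('x::finite + ('m::finite \<times> 'e::finite)) \<Rightarrow> real^'x" where
  "wpart d = (\<chi> a. d $ Inl a)"

definition npart :: "real^('x::finite + ('m::finite \<times> 'e::finite)) \<Rightarrow> 'm \<Rightarrow> real^'e" where
  "npart d i = (\<chi> b. d $ Inr (i, b))"

section \<open>Predicted trajectories (relative index j = k - t)\<close>

fun obar_rel :: "('x::finite,'u::finite,'m::finite,'e::finite) dyn \<Rightarrow> nat \<Rightarrow> nat \<Rightarrow> 'm \<Rightarrow> real^'x" where
  "obar_rel S t 0 i = do0 S i"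
| "obar_rel S t (Suc j) i = dT S i (t+j) *v obar_rel S t j i + dq S i (t+j)"

definition obar :: "('x::finite,'u::finite,'m::finite,'e::finite) dyn \<Rightarrow> nat \<Rightarrow> nat \<Rightarrow> 'm \<Rightarrow> real^'x" where
  "obar S t k i = obar_rel S t (k - t) i"

fun o_rel :: "('x::finite,'u::finite,'m::finite,'e::finite) dyn \<Rightarrow> nat
    \<Rightarrow> (nat \<Rightarrow> real^('x + 'm \<times> 'e)) \<Rightarrow> nat \<Rightarrow> 'm \<Rightarrow> real^'x" where
  "o_rel S t V 0 i = do0 S i"
| "o_rel S t V (Suc j) i = dT S i (t+j) *v o_rel S t V j i + dq S i (t+j)
      + dF S i (t+j) *v npart (V (t+j)) i"

definition ostate :: "('x::finite,'u::finite,'m::finite,'e::finite) dyn \<Rightarrow> nat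
    \<Rightarrow> (nat \<Rightarrow> real^('x + 'm \<times> 'e)) \<Rightarrow> nat \<Rightarrow> 'm \<Rightarrow> real^'x" where
  "ostate S t V k i = o_rel S t V (k - t) i"

definition ctrl :: "('x::finite,'u::finite,'m::finite,'e::finite) dyn \<Rightarrow> ('x,'u,'m) policy \<Rightarrow> nat
    \<Rightarrow> (nat \<Rightarrow> real^('x + 'm \<times> 'e)) \<Rightarrow> nat \<Rightarrow> real^'u" where
  "ctrl S P t V k = ph P k + (\<Sum>l\<in>{t..<k}. pM P l k *v wpart (V l))
      + pK P k *v (\<chi> p. (ostate S t V k (fst p) - obar S t k (fst p)) $ snd p)"

fun x_rel :: "('x::finite,'u::finite,'m::finite,'e::finite) dyn \<Rightarrow> ('x,'u,'m) policy \<Rightarrow> nat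
    \<Rightarrow> (nat \<Rightarrow> real^('x + 'm \<times> 'e)) \<Rightarrow> nat \<Rightarrow> real^'x" where
  "x_rel S P t V 0 = dx0 S"
| "x_rel S P t V (Suc j) = dA S (t+j) *v x_rel S P t V j + dB S (t+j) *v ctrl S P t V (t+j)
      + dE S (t+j) *v wpart (V (t+j))"

definition xstate :: "('x::finite,'u::finite,'m::finite,'e::finite) dyn \<Rightarrow> ('x,'u,'m) policy \<Rightarrow> nat
    \<Rightarrow> (nat \<Rightarrow> real^('x + 'm \<times> 'e)) \<Rightarrow> nat \<Rightarrow> real^'x" where
  "xstate S P t V k = x_rel S P t V (k - t)"

fun xbar_rel :: "('x::finite,'u::finite,'m::finite,'e::finite) dyn \<Rightarrow> ('x,'u,'m) policy \<Rightarrow> nat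
    \<Rightarrow> nat \<Rightarrow> real^'x" where
  "xbar_rel S P t 0 = dx0 S"
| "xbar_rel S P t (Suc j) = dA S (t+j) *v xbar_rel S P t j + dB S (t+j) *v ph P (t+j)"

definition xbar :: "('x::finite,'u::finite,'m::finite,'e::finite) dyn \<Rightarrow> ('x,'u,'m) policy \<Rightarrow> nat
    \<Rightarrow> nat \<Rightarrow> real^'x" where
  "xbar S P t k = xbar_rel S P t (k - t)"

definition lGR :: "('x::finite,'n::finite,'l::finite,'m::finite) geo \<Rightarrow> ('m \<Rightarrow> nat \<Rightarrow> real^'l)
    \<Rightarrow> 'm \<Rightarrow> nat \<Rightarrow> real^'n" where
  "lGR Gm lam i k = lam i k v* (gG Gm ** transpose (gR Gm k))"

definition nGR :: "('x::finite,'n::finite,'l::finite,'m::finite) geo \<Rightarrow> ('m \<Rightarrow> nat \<Rightarrow> real^'l)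
    \<Rightarrow> 'm \<Rightarrow> nat \<Rightarrow> real^'n" where
  "nGR Gm nu i k = nu i k v* (gGi Gm i ** transpose (gRi Gm i k))"

definition dual_feas :: "('x::finite,'n::finite,'l::finite,'m::finite) geo \<Rightarrow> ('m \<Rightarrow> nat \<Rightarrow> real^'l)
    \<Rightarrow> ('m \<Rightarrow> nat \<Rightarrow> real^'l) \<Rightarrow> 'm \<Rightarrow> nat \<Rightarrow> bool" where
  "dual_feas Gm lam nu i k \<longleftrightarrow>
     lam i k \<in> dual_cone (gK Gm) \<and> nu i k \<in> dual_cone (gK Gm) \<and>
     norm (lGR Gm lam i k) \<le> 1 \<and> lGR Gm lam i k = - nGR Gm nu i k"

definition CA :: "('x::finite,'u::finite,'m::finite,'e::finite) dyn \<Rightarrow> ('x,'u,'m) policy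
    \<Rightarrow> ('x,'n::finite,'l::finite,'m) geo \<Rightarrow> nat \<Rightarrow> nat
    \<Rightarrow> ('m \<Rightarrow> nat \<Rightarrow> real^'l) \<Rightarrow> ('m \<Rightarrow> nat \<Rightarrow> real^'l)
    \<Rightarrow> (nat \<Rightarrow> real^('x + 'm \<times> 'e)) \<Rightarrow> bool" where
  "CA S P Gm t N lam nu V \<longleftrightarrow>
     (\<forall>k\<in>{t+1..t+N}. \<forall>i. dual_feas Gm lam nu i k \<and>
        lam i k \<bullet> ((gG Gm ** transpose (gR Gm k)) *v
            (gC Gm *v (xstate S P t V k - ostate S t V k i) + gc Gm) + gg Gm)
        < - (nu i k \<bullet> ggi Gm i))"

definition XU :: "('x::finite,'u::finite,'m::finite,'e::finite) dyn \<Rightarrow> ('x,'u,'m) policy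
    \<Rightarrow> (nat \<Rightarrow> real^'x) \<Rightarrow> (nat \<Rightarrow> real^'u) \<Rightarrow> (nat \<Rightarrow> real) \<Rightarrow> nat \<Rightarrow> nat \<Rightarrow> nat
    \<Rightarrow> (nat \<Rightarrow> real^('x + 'm \<times> 'e)) \<Rightarrow> bool" where
  "XU S P Fx Fu f J t N V \<longleftrightarrow>
     (\<forall>k\<in>{t..<t+N}. \<forall>j\<in>{1..J}.
        Fx j \<bullet> xstate S P t V (Suc k) + Fu j \<bullet> ctrl S P t V k \<le> f j)"

definition Yca :: "('x::finite,'u::finite,'m::finite,'e::finite) dyn \<Rightarrow> ('x,'u,'m) policy
    \<Rightarrow> ('x,'n::finite,'l::finite,'m) geo \<Rightarrow> nat
    \<Rightarrow> ('m \<Rightarrow> nat \<Rightarrow> real^'l) \<Rightarrow> ('m \<Rightarrow> nat \<Rightarrow> real^'l) \<Rightarrow> 'm \<Rightarrow> nat \<Rightarrow> real" where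
  "Yca S P Gm t lam nu i k =
     - (lam i k \<bullet> gg Gm) - (nu i k \<bullet> ggi Gm i)
     - lam i k \<bullet> ((gG Gm ** transpose (gR Gm k)) *v gc Gm)
     - lam i k \<bullet> ((gG Gm ** transpose (gR Gm k)) *v (gC Gm *v (xbar S P t k - obar S t k i)))"

text \<open>\<open>Z^i_{k|t} P\<close>, represented blockwise: the family z with z l = the block of the row
vector \<open>Z^i_{k|t} P\<close> acting on \<open>[w_{l|t}; n_{l|t}]\<close>, l = t..t+N-1 (and z l = 0 outside the
horizon), uniquely determined by the defining identity for all noise values.\<close>
definition Zca :: "('x::finite,'u::finite,'m::finite,'e::finite) dyn \<Rightarrow> ('x,'u,'m) policy
    \<Rightarrow> ('x,'n::finite,'l::finite,'m) geo \<Rightarrow> nat \<Rightarrow> nat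
    \<Rightarrow> ('m \<Rightarrow> nat \<Rightarrow> real^'l) \<Rightarrow> 'm \<Rightarrow> nat \<Rightarrow> (nat \<Rightarrow> real^('x + 'm \<times> 'e))" where
  "Zca S P Gm t N lam i k = (THE z. (\<forall>l. l \<notin> {t..<t+N} \<longrightarrow> z l = 0) \<and>
     (\<forall>V. lam i k \<bullet> ((gG Gm ** transpose (gR Gm k)) *v (gC Gm *v (xstate S P t V k - ostate S t V k i)))
        = lam i k \<bullet> ((gG Gm ** transpose (gR Gm k)) *v (gC Gm *v (xbar S P t k - obar S t k i)))
          + (\<Sum>l\<in>{t..<t+N}. z l \<bullet> V l)))"

definition Yxu :: "('x::finite,'u::finite,'m::finite,'e::finite) dyn \<Rightarrow> ('x,'u,'m) policy
    \<Rightarrow> (nat \<Rightarrow> real^'x) \<Rightarrow> (nat \<Rightarrow> real^'u) \<Rightarrow> (nat \<Rightarrow> real) \<Rightarrow> nat \<Rightarrow> nat \<Rightarrow> nat \<Rightarrow> real" where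
  "Yxu S P Fx Fu f t j k = f j - Fx j \<bullet> xbar S P t (Suc k) - Fu j \<bullet> ph P k"

text \<open>\<open>Zbar^j_{k|t} P\<close>, blockwise as for Zca.\<close>
definition Zxu :: "('x::finite,'u::finite,'m::finite,'e::finite) dyn \<Rightarrow> ('x,'u,'m) policy
    \<Rightarrow> (nat \<Rightarrow> real^'x) \<Rightarrow> (nat \<Rightarrow> real^'u) \<Rightarrow> nat \<Rightarrow> nat \<Rightarrow> nat \<Rightarrow> nat
    \<Rightarrow> (nat \<Rightarrow> real^('x + 'm \<times> 'e))" where
  "Zxu S P Fx Fu t N j k = (THE z. (\<forall>l. l \<notin> {t..<t+N} \<longrightarrow> z l = 0) \<and>
     (\<forall>V. Fx j \<bullet> xstate S P t V (Suc k) + Fu j \<bullet> ctrl S P t V k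
        = Fx j \<bullet> xbar S P t (Suc k) + Fu j \<bullet> ph P k + (\<Sum>l\<in>{t..<t+N}. z l \<bullet> V l)))"

text \<open>\<open>\<parallel>(ZP) (I_N \<otimes> \<Gamma>)^{-1}\<parallel>_1\<close> for ZP given blockwise by z (using (I_N \<otimes> \<Gamma>)^{-1} = I_N \<otimes> \<Gamma>^{-1}).\<close>
definition norm1_kron_inv :: "real^'d^'d \<Rightarrow> nat \<Rightarrow> nat \<Rightarrow> (nat \<Rightarrow> real^'d::finite) \<Rightarrow> real" where
  "norm1_kron_inv Gam t N z = (\<Sum>l\<in>{t..<t+N}. \<Sum>a\<in>UNIV. \<bar>(z l v* matrix_inv Gam) $ a\<bar>)"

definition psd :: "real^'d^'d::finite \<Rightarrow> bool" where
  "psd S \<longleftrightarrow> transpose S = S \<and> (\<forall>x. 0 \<le> x \<bullet> (S *v x))"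

definition psd_sqrt :: "real^'d^'d::finite \<Rightarrow> real^'d^'d" where
  "psd_sqrt S = (THE R. psd R \<and> R ** R = S)"

text \<open>\<open>\<parallel>(ZP) (I_N \<otimes> \<Sigma>)^{1/2}\<parallel>_2\<close> for ZP given blockwise by z (using (I_N \<otimes> \<Sigma>)^{1/2} = I_N \<otimes> \<Sigma>^{1/2}).\<close>
definition norm2_kron_sqrt :: "real^'d^'d \<Rightarrow> nat \<Rightarrow> nat \<Rightarrow> (nat \<Rightarrow> real^'d::finite) \<Rightarrow> real" where
  "norm2_kron_sqrt Sig t N z = sqrt (\<Sum>l\<in>{t..<t+N}. (norm (z l v* psd_sqrt Sig))\<^sup>2)"

definition std_normal_cdf :: "real \<Rightarrow> real" where
  "std_normal_cdf = cdf (density lborel std_normal_density)"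

definition std_normal_quantile :: "real \<Rightarrow> real" where
  "std_normal_quantile p = (THE x. std_normal_cdf x = p)"

definition centered_gaussian_rv :: "'w measure \<Rightarrow> ('w \<Rightarrow> real) \<Rightarrow> real \<Rightarrow> bool" where
  "centered_gaussian_rv Pm X s2 \<longleftrightarrow>
     (s2 = 0 \<and> X \<in> borel_measurable Pm \<and> (AE w in Pm. X w = 0)) \<or>
     (0 < s2 \<and> distributed Pm lborel X (normal_density 0 (sqrt s2)))"

text \<open>The stacked noise vector (V w l)_{l = t..t+N-1} is multivariate Gaussian N(0, I_N \<otimes> \<Sigma>),
i.e. every linear functional of it is centered Gaussian with the corresponding variance.\<close>
definition stacked_gaussian :: "'w measure \<Rightarrow> ('w \<Rightarrow> nat \<Rightarrow> real^'d::finite) \<Rightarrow> nat \<Rightarrow> nat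
    \<Rightarrow> real^'d^'d \<Rightarrow> bool" where
  "stacked_gaussian Pm V t N Sig \<longleftrightarrow>
     (\<forall>l\<in>{t..<t+N}. (\<lambda>w. V w l) \<in> borel_measurable Pm) \<and>
     (\<forall>c :: nat \<Rightarrow> real^'d. centered_gaussian_rv Pm (\<lambda>w. \<Sum>l\<in>{t..<t+N}. c l \<bullet> V w l)
          (\<Sum>l\<in>{t..<t+N}. c l \<bullet> (Sig *v c l)))"

text \<open>E(v) = 0 and E(v v^T) = I_N \<otimes> \<Sigma> for the stacked noise vector.\<close>
definition stacked_moments :: "'w measure \<Rightarrow> ('w \<Rightarrow> nat \<Rightarrow> real^'d::finite) \<Rightarrow> nat \<Rightarrow> nat
    \<Rightarrow> real^'d^'d \<Rightarrow> bool" where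
  "stacked_moments Pm V t N Sig \<longleftrightarrow>
     (\<forall>l\<in>{t..<t+N}. (\<lambda>w. V w l) \<in> borel_measurable Pm) \<and>
     (\<forall>l\<in>{t..<t+N}. \<forall>a. integrable Pm (\<lambda>w. V w l $ a) \<and> (\<integral>w. V w l $ a \<partial>Pm) = 0) \<and>
     (\<forall>l\<in>{t..<t+N}. \<forall>l'\<in>{t..<t+N}. \<forall>a b.
        integrable Pm (\<lambda>w. V w l $ a * V w l' $ b) \<and>
        (\<integral>w. V w l $ a * V w l' $ b \<partial>Pm) = (if l = l' then Sig $ a $ b else 0))"

end

theory Submission
  imports Defs
begin

lemma dot_mv: "(y::real^'n) \<bullet> (A *v v) = (y v* A) \<bullet> (v::real^'m)"
  unfolding inner_vec_def matrix_vector_mult_def vector_matrix_mult_def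
  apply (simp add: sum_distrib_left sum_distrib_right)
  apply (subst sum.swap)
  apply (simp add: mult_ac)
  done

lemma mv_sum: "(A::real^'m^'n) *v sum f I = (\<Sum>i\<in>I. A *v f i)"
  by (induction I rule: infinite_finite_induct) (simp_all add: matrix_vector_right_distrib)

lemma delta_mult: "(\<Sum>j\<in>UNIV. (if j = (a::'a::finite) then 1 else 0) * (x j::real)) = x a"
proof -
  have "(\<Sum>j\<in>UNIV. (if j = a then 1 else 0) * x j) = (\<Sum>j\<in>UNIV. if j = a then x j else 0)"
    by (rule sum.cong) auto
  then show ?thesis by simp
qed

definition linv :: "nat set \<Rightarrow> ((nat \<Rightarrow> real^'d::finite) \<Rightarrow> real^'n::finite) \<Rightarrow> bool" where
  "linv I F \<longleftrightarrow> (\<exists>Z::nat \<Rightarrow> real^'d^'n. \<forall>V. F V = (\<Sum>l\<in>I. Z l *v V l))"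

lemma linv_zero: "linv I (\<lambda>V. 0)"
  unfolding linv_def by (rule exI[of _ "\<lambda>l. 0"]) simp

lemma linv_add: assumes "linv I F" "linv I G" shows "linv I (\<lambda>V. F V + G V)"
proof -
  obtain Z Z' where "\<forall>V. F V = (\<Sum>l\<in>I. Z l *v V l)" "\<forall>V. G V = (\<Sum>l\<in>I. Z' l *v V l)"
    using assms unfolding linv_def by blast
  then show ?thesis unfolding linv_def
    by (intro exI[of _ "\<lambda>l. Z l + Z' l"]) (simp add: matrix_vector_mult_add_rdistrib sum.distrib)
qed

lemma linv_mult: assumes "linv I F" shows "linv I (\<lambda>V. A *v F V)"
proof -
  obtain Z where "\<forall>V. F V = (\<Sum>l\<in>I. Z l *v V l)"
    using assms unfolding linv_def by blast
  then show ?thesis unfolding linv_def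
    by (intro exI[of _ "\<lambda>l. A ** Z l"]) (simp add: mv_sum matrix_vector_mul_assoc)
qed

lemma mv_neg: "(- Z) *v (v::real^'m) = - (Z *v v)"
  by (simp add: matrix_vector_mult_def vec_eq_iff sum_negf)

lemma linv_neg: assumes "linv I F" shows "linv I (\<lambda>V. - F V)"
proof -
  obtain Z where "\<forall>V. F V = (\<Sum>l\<in>I. Z l *v V l)"
    using assms unfolding linv_def by blast
  then show ?thesis unfolding linv_def
    by (intro exI[of _ "\<lambda>l. - Z l"]) (simp add: mv_neg sum_negf)
qed

lemma linv_diff: assumes "linv I F" "linv I G" shows "linv I (\<lambda>V. F V - G V)"
  using linv_add[OF assms(1) linv_neg[OF assms(2)]] by simp

lemma linv_sum: "finite K \<Longrightarrow> (\<forall>k\<in>K. linv I (F k)) \<Longrightarrow> linv I (\<lambda>V. \<Sum>k\<in>K. F k V)"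
proof (induction K rule: finite_induct)
  case empty then show ?case by (simp add: linv_zero)
next
  case (insert x F) then show ?case by (simp add: linv_add)
qed

lemma linv_coord: assumes "finite I" "l0 \<in> I" shows "linv I (\<lambda>V. V l0)"
  unfolding linv_def
proof (rule exI[of _ "\<lambda>l. if l = l0 then mat 1 else 0"], rule allI)
  fix V :: "nat \<Rightarrow> real^'a"
  have "(\<Sum>l\<in>I. (if l = l0 then mat 1 else 0) *v V l) = (\<Sum>l\<in>I. if l = l0 then V l else 0)"
    by (rule sum.cong) auto
  also have "\<dots> = V l0" using assms by simp
  finally show "V l0 = (\<Sum>l\<in>I. (if l = l0 then mat 1 else 0) *v V l)" by simp
qed

lemma wpart_mat: "wpart (v::real^('x::finite + ('m::finite \<times> 'e::finite))) =
   (\<chi> a b. if b = Inl a then 1 else 0) *v v"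
  by (simp add: wpart_def matrix_vector_mult_def vec_eq_iff delta_mult)

lemma npart_mat: "npart (v::real^('x::finite + ('m::finite \<times> 'e::finite))) i =
   (\<chi> a b. if b = Inr (i, a) then 1 else 0) *v v"
proof (subst vec_eq_iff, rule allI)
  fix a
  have "((\<chi> a b. if b = Inr (i, a) then 1 else 0) *v v) $ a = (\<Sum>b\<in>UNIV. (if b = Inr (i, a) then 1 else 0) * v $ b)"
    by (simp add: matrix_vector_mult_def)
  also have "\<dots> = v $ Inr (i,a)" by (rule delta_mult)
  finally show "npart v i $ a = ((\<chi> a b. if b = Inr (i, a) then 1 else 0) *v v) $ a"
    by (simp add: npart_def)
qed

lemma linv_wpart: "finite I \<Longrightarrow> l0 \<in> I \<Longrightarrow> linv I (\<lambda>V. wpart (V l0))"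
  unfolding wpart_mat by (intro linv_mult linv_coord)

lemma linv_npart: "finite I \<Longrightarrow> l0 \<in> I \<Longrightarrow> linv I (\<lambda>V. npart (V l0) i)"
  unfolding npart_mat by (intro linv_mult linv_coord)

lemma linv_stack: assumes "\<forall>i. linv I (F i)"
  shows "linv I (\<lambda>V. \<chi> p. F (fst p) V $ snd p)"
proof -
  obtain Z where Z: "\<forall>i V. F i V = (\<Sum>l\<in>I. Z i l *v V l)"
    using assms unfolding linv_def by metis
  show ?thesis unfolding linv_def
    apply (rule exI[of _ "\<lambda>l. \<chi> p. Z (fst p) l $ snd p"])
    apply (simp add: Z vec_eq_iff matrix_vector_mul_component)
    done
qed

lemma linv_dot: assumes "linv I F"
  shows "\<exists>z. (\<forall>l. l \<notin> I \<longrightarrow> z l = 0) \<and> (\<forall>V. y \<bullet> F V = (\<Sum>l\<in>I. z l \<bullet> V l))"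
proof -
  obtain Z where Z: "\<forall>V. F V = (\<Sum>l\<in>I. Z l *v V l)"
    using assms unfolding linv_def by blast
  show ?thesis
    by (rule exI[of _ "\<lambda>l. if l \<in> I then y v* Z l else 0"])
       (simp add: Z inner_sum_right dot_mv)
qed

lemma rep_unique:
  fixes z z' :: "nat \<Rightarrow> real^'d::finite"
  assumes "finite I" "\<forall>l. l \<notin> I \<longrightarrow> z l = 0" "\<forall>l. l \<notin> I \<longrightarrow> z' l = 0"
    "\<forall>V. (\<Sum>l\<in>I. z l \<bullet> V l) = (\<Sum>l\<in>I. z' l \<bullet> V l)"
  shows "z = z'"
proof
  fix l0
  show "z l0 = z' l0"
  proof (cases "l0 \<in> I")
    case True
    define V where "V = (\<lambda>l. if l = l0 then z l0 - z' l0 else 0)"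
    have "(\<Sum>l\<in>I. (z l - z' l) \<bullet> V l) = 0"
      using assms(4)[rule_format, of V] by (simp add: inner_diff_left sum_subtractf)
    moreover have "(\<Sum>l\<in>I. (z l - z' l) \<bullet> V l) = (z l0 - z' l0) \<bullet> (z l0 - z' l0)"
      using True assms(1) by (simp add: V_def if_distrib sum.delta cong: if_cong)
    ultimately show ?thesis by simp
  next
    case False then show ?thesis using assms by simp
  qed
qed

lemma the_rep:
  fixes G :: "(nat \<Rightarrow> real^'d::finite) \<Rightarrow> real"
  assumes "finite I" "\<forall>l. l \<notin> I \<longrightarrow> z l = 0" "\<forall>V. G V = c + (\<Sum>l\<in>I. z l \<bullet> V l)"
  shows "(THE z. (\<forall>l. l \<notin> I \<longrightarrow> z l = 0) \<and> (\<forall>V. G V = c + (\<Sum>l\<in>I. z l \<bullet> V l))) = z"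
proof (rule the_equality)
  show "(\<forall>l. l \<notin> I \<longrightarrow> z l = 0) \<and> (\<forall>V. G V = c + (\<Sum>l\<in>I. z l \<bullet> V l))" using assms by blast
next
  fix z' assume h: "(\<forall>l. l \<notin> I \<longrightarrow> z' l = 0) \<and> (\<forall>V. G V = c + (\<Sum>l\<in>I. z' l \<bullet> V l))"
  have "\<forall>V. (\<Sum>l\<in>I. z' l \<bullet> V l) = (\<Sum>l\<in>I. z l \<bullet> V l)"
  proof
    fix V show "(\<Sum>l\<in>I. z' l \<bullet> V l) = (\<Sum>l\<in>I. z l \<bullet> V l)"
      using h assms(3) by (metis add_left_cancel)
  qed
  then show "z' = z" using rep_unique[OF assms(1)] h assms(2) by blast
qed

lemma o_lin: "j \<le> N \<Longrightarrow> linv {t..<t+N} (\<lambda>V. o_rel S t V j i - obar_rel S t j i)"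
proof (induction j)
  case 0 then show ?case by (simp add: linv_zero)
next
  case (Suc j)
  have e: "\<And>V. o_rel S t V (Suc j) i - obar_rel S t (Suc j) i =
     dT S i (t+j) *v (o_rel S t V j i - obar_rel S t j i) + dF S i (t+j) *v npart (V (t+j)) i"
    by (simp add: matrix_vector_mult_diff_distrib)
  show ?case unfolding e
    using Suc by (intro linv_add linv_mult linv_npart) auto
qed

lemma stack_lin: "j \<le> N \<Longrightarrow>
  linv {t..<t+N} (\<lambda>V. \<chi> p. (o_rel S t V j (fst p) - obar_rel S t j (fst p)) $ snd p)"
  using linv_stack[of "{t..<t+N}" "\<lambda>i V. o_rel S t V j i - obar_rel S t j i"] o_lin by blast

lemma ctrl_lin: assumes "j \<le> N"
  shows "linv {t..<t+N} (\<lambda>V. ctrl S P t V (t+j) - ph P (t+j))"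
proof -
  have e: "\<And>V. ctrl S P t V (t+j) - ph P (t+j) =
     (\<Sum>l\<in>{t..<t+j}. pM P l (t+j) *v wpart (V l))
     + pK P (t+j) *v (\<chi> p. (o_rel S t V j (fst p) - obar_rel S t j (fst p)) $ snd p)"
    by (simp add: ctrl_def ostate_def obar_def)
  show ?thesis unfolding e
    using assms by (intro linv_add linv_mult linv_sum stack_lin ballI linv_wpart) auto
qed

lemma x_lin: "j \<le> N \<Longrightarrow> linv {t..<t+N} (\<lambda>V. x_rel S P t V j - xbar_rel S P t j)"
proof (induction j)
  case 0 then show ?case by (simp add: linv_zero)
next
  case (Suc j)
  have e: "\<And>V. x_rel S P t V (Suc j) - xbar_rel S P t (Suc j) =
     dA S (t+j) *v (x_rel S P t V j - xbar_rel S P t j) + dB S (t+j) *v (ctrl S P t V (t+j) - ph P (t+j))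
     + dE S (t+j) *v wpart (V (t+j))"
    by (simp add: matrix_vector_mult_diff_distrib algebra_simps)
  show ?case unfolding e
    using Suc by (intro linv_add linv_mult linv_wpart ctrl_lin) auto
qed

lemma Zca_rep:
  assumes "t \<le> k" "k \<le> t + N"
  shows "\<forall>V. lam i k \<bullet> ((gG Gm ** transpose (gR Gm k)) *v (gC Gm *v (xstate S P t V k - ostate S t V k i)))
        = lam i k \<bullet> ((gG Gm ** transpose (gR Gm k)) *v (gC Gm *v (xbar S P t k - obar S t k i)))
          + (\<Sum>l\<in>{t..<t+N}. Zca S P Gm t N lam i k l \<bullet> V l)"
proof -
  define A where "A = gG Gm ** transpose (gR Gm k) ** gC Gm"
  have "linv {t..<t+N} (\<lambda>V. A *v ((x_rel S P t V (k-t) - xbar_rel S P t (k-t)) - (o_rel S t V (k-t) i - obar_rel S t (k-t) i)))"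
    using assms by (intro linv_mult linv_diff x_lin o_lin) auto
  from linv_dot[OF this, of "lam i k"] obtain z where z: "\<forall>l. l \<notin> {t..<t+N} \<longrightarrow> z l = 0"
    "\<forall>V. lam i k \<bullet> (A *v ((x_rel S P t V (k-t) - xbar_rel S P t (k-t)) - (o_rel S t V (k-t) i - obar_rel S t (k-t) i)))
       = (\<Sum>l\<in>{t..<t+N}. z l \<bullet> V l)" by blast
  have rep: "\<forall>V. lam i k \<bullet> ((gG Gm ** transpose (gR Gm k)) *v (gC Gm *v (xstate S P t V k - ostate S t V k i)))
        = lam i k \<bullet> ((gG Gm ** transpose (gR Gm k)) *v (gC Gm *v (xbar S P t k - obar S t k i)))
          + (\<Sum>l\<in>{t..<t+N}. z l \<bullet> V l)"
  proof
    fix V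
    have "(gG Gm ** transpose (gR Gm k)) *v (gC Gm *v (xstate S P t V k - ostate S t V k i))
       = (gG Gm ** transpose (gR Gm k)) *v (gC Gm *v (xbar S P t k - obar S t k i))
         + A *v ((x_rel S P t V (k-t) - xbar_rel S P t (k-t)) - (o_rel S t V (k-t) i - obar_rel S t (k-t) i))"
      unfolding A_def xstate_def ostate_def xbar_def obar_def
      by (simp add: matrix_vector_mul_assoc[symmetric] matrix_vector_mult_diff_distrib matrix_vector_right_distrib[symmetric])
    then show "lam i k \<bullet> ((gG Gm ** transpose (gR Gm k)) *v (gC Gm *v (xstate S P t V k - ostate S t V k i)))
        = lam i k \<bullet> ((gG Gm ** transpose (gR Gm k)) *v (gC Gm *v (xbar S P t k - obar S t k i)))
          + (\<Sum>l\<in>{t..<t+N}. z l \<bullet> V l)"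
      using z(2) by (simp add: inner_add_right)
  qed
  have "Zca S P Gm t N lam i k = z"
    unfolding Zca_def by (rule the_rep[OF _ z(1) rep]) simp
  then show ?thesis using rep by simp
qed

lemma Zxu_rep:
  assumes "t \<le> k" "k < t + N"
  shows "\<forall>V. Fx j \<bullet> xstate S P t V (Suc k) + Fu j \<bullet> ctrl S P t V k
        = Fx j \<bullet> xbar S P t (Suc k) + Fu j \<bullet> ph P k + (\<Sum>l\<in>{t..<t+N}. Zxu S P Fx Fu t N j k l \<bullet> V l)"
proof -
  have lx: "linv {t..<t+N} (\<lambda>V. x_rel S P t V (Suc (k-t)) - xbar_rel S P t (Suc (k-t)))"
    using assms by (intro x_lin) auto
  have lu: "linv {t..<t+N} (\<lambda>V. ctrl S P t V (t + (k-t)) - ph P (t + (k-t)))"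
    using assms by (intro ctrl_lin) auto
  from linv_dot[OF lx, of "Fx j"] obtain z1 where z1: "\<forall>l. l \<notin> {t..<t+N} \<longrightarrow> z1 l = 0"
    "\<forall>V. Fx j \<bullet> (x_rel S P t V (Suc (k-t)) - xbar_rel S P t (Suc (k-t))) = (\<Sum>l\<in>{t..<t+N}. z1 l \<bullet> V l)"
    by blast
  from linv_dot[OF lu, of "Fu j"] obtain z2 where z2: "\<forall>l. l \<notin> {t..<t+N} \<longrightarrow> z2 l = 0"
    "\<forall>V. Fu j \<bullet> (ctrl S P t V (t + (k-t)) - ph P (t + (k-t))) = (\<Sum>l\<in>{t..<t+N}. z2 l \<bullet> V l)"
    by blast
  have kk: "t + (k - t) = k" "Suc k - t = Suc (k - t)" using assms by auto
  have rep: "\<forall>V. Fx j \<bullet> xstate S P t V (Suc k) + Fu j \<bullet> ctrl S P t V k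
        = Fx j \<bullet> xbar S P t (Suc k) + Fu j \<bullet> ph P k + (\<Sum>l\<in>{t..<t+N}. (z1 l + z2 l) \<bullet> V l)"
  proof
    fix V
    show "Fx j \<bullet> xstate S P t V (Suc k) + Fu j \<bullet> ctrl S P t V k
        = Fx j \<bullet> xbar S P t (Suc k) + Fu j \<bullet> ph P k + (\<Sum>l\<in>{t..<t+N}. (z1 l + z2 l) \<bullet> V l)"
      using z1(2)[rule_format, of V] z2(2)[rule_format, of V]
      unfolding xstate_def xbar_def kk
      by (simp add: inner_diff_right inner_add_left sum.distrib)
  qed
  have "Zxu S P Fx Fu t N j k = (\<lambda>l. z1 l + z2 l)"
    unfolding Zxu_def by (rule the_rep[OF _ _ rep]) (use z1 z2 in auto)
  then show ?thesis using rep by simp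
qed

lemma inv_mat:
  assumes "invertible (Gam::real^'d::finite^'d)"
  shows "matrix_inv Gam ** Gam = mat 1" "Gam ** matrix_inv Gam = mat 1"
proof -
  have "\<exists>A'. Gam ** A' = mat 1 \<and> A' ** Gam = mat 1" using assms unfolding invertible_def by blast
  then have "Gam ** matrix_inv Gam = mat 1 \<and> matrix_inv Gam ** Gam = mat 1"
    unfolding matrix_inv_def by (rule someI_ex)
  then show "matrix_inv Gam ** Gam = mat 1" "Gam ** matrix_inv Gam = mat 1" by auto
qed

lemma mult_sgn_self: "(x::real) * sgn x = \<bar>x\<bar>"
  by (cases "x > 0"; cases "x = 0") auto

lemma infnorm_le_cart: "(\<And>i. \<bar>(x::real^'n) $ i\<bar> \<le> b) \<Longrightarrow> infnorm x \<le> b"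
  unfolding infnorm_cart by (rule cSup_least) auto

lemma dot_le_l1:
  fixes w u :: "real^'d::finite"
  assumes "infnorm u \<le> \<gamma>"
  shows "w \<bullet> u \<le> \<gamma> * (\<Sum>a\<in>UNIV. \<bar>w $ a\<bar>)"
proof -
  have "w \<bullet> u = (\<Sum>a\<in>UNIV. w $ a * u $ a)" by (simp add: inner_vec_def)
  also have "\<dots> \<le> (\<Sum>a\<in>UNIV. \<bar>w $ a\<bar> * \<gamma>)"
  proof (rule sum_mono)
    fix a
    have "\<bar>u $ a\<bar> \<le> \<gamma>" using component_le_infnorm_cart[of u a] assms by linarith
    then have "w $ a * u $ a \<le> \<bar>w $ a\<bar> * \<bar>u $ a\<bar>" by (simp add: abs_mult[symmetric])
    also have "\<dots> \<le> \<bar>w $ a\<bar> * \<gamma>" using \<open>\<bar>u $ a\<bar> \<le> \<gamma>\<close> by (simp add: mult_left_mono)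
    finally show "w $ a * u $ a \<le> \<bar>w $ a\<bar> * \<gamma>" .
  qed
  finally show ?thesis by (simp add: sum_distrib_left mult_ac)
qed

lemma box_bound:
  fixes z V :: "nat \<Rightarrow> real^'d::finite"
  assumes "invertible Gam" "\<forall>l\<in>{t..<t+N}. infnorm (Gam *v V l) \<le> \<gamma>"
  shows "(\<Sum>l\<in>{t..<t+N}. z l \<bullet> V l) \<le> \<gamma> * norm1_kron_inv Gam t N z"
proof -
  have "(\<Sum>l\<in>{t..<t+N}. z l \<bullet> V l) \<le> (\<Sum>l\<in>{t..<t+N}. \<gamma> * (\<Sum>a\<in>UNIV. \<bar>(z l v* matrix_inv Gam) $ a\<bar>))"
  proof (rule sum_mono)
    fix l assume l: "l \<in> {t..<t+N}"
    have "z l \<bullet> V l = z l \<bullet> (matrix_inv Gam *v (Gam *v V l))"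
      by (simp add: matrix_vector_mul_assoc inv_mat[OF assms(1)])
    also have "\<dots> = (z l v* matrix_inv Gam) \<bullet> (Gam *v V l)" by (rule dot_mv)
    also have "\<dots> \<le> \<gamma> * (\<Sum>a\<in>UNIV. \<bar>(z l v* matrix_inv Gam) $ a\<bar>)"
      using assms(2) l by (intro dot_le_l1) auto
    finally show "z l \<bullet> V l \<le> \<gamma> * (\<Sum>a\<in>UNIV. \<bar>(z l v* matrix_inv Gam) $ a\<bar>)" .
  qed
  then show ?thesis by (simp add: norm1_kron_inv_def sum_distrib_left)
qed

lemma box_attain:
  fixes z :: "nat \<Rightarrow> real^'d::finite"
  assumes "invertible Gam" "0 \<le> \<gamma>"
  shows "\<exists>V. (\<forall>l\<in>{t..<t+N}. infnorm (Gam *v V l) \<le> \<gamma>) \<and>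
     (\<Sum>l\<in>{t..<t+N}. z l \<bullet> V l) = \<gamma> * norm1_kron_inv Gam t N z"
proof -
  define u where "u l = (\<chi> a. \<gamma> * sgn ((z l v* matrix_inv Gam) $ a))" for l
  define V where "V l = matrix_inv Gam *v u l" for l
  have GV: "Gam *v V l = u l" for l
    by (simp add: V_def matrix_vector_mul_assoc inv_mat[OF assms(1)])
  have "infnorm (Gam *v V l) \<le> \<gamma>" for l
    unfolding GV u_def using assms(2)
    by (intro infnorm_le_cart) (auto simp: abs_mult abs_sgn_eq)
  moreover have "z l \<bullet> V l = \<gamma> * (\<Sum>a\<in>UNIV. \<bar>(z l v* matrix_inv Gam) $ a\<bar>)" for l
  proof -
    have "z l \<bullet> V l = (z l v* matrix_inv Gam) \<bullet> u l" unfolding V_def by (rule dot_mv)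
    also have "\<dots> = (\<Sum>a\<in>UNIV. \<gamma> * ((z l v* matrix_inv Gam) $ a * sgn ((z l v* matrix_inv Gam) $ a)))"
      by (simp add: inner_vec_def u_def mult_ac)
    also have "\<dots> = \<gamma> * (\<Sum>a\<in>UNIV. \<bar>(z l v* matrix_inv Gam) $ a\<bar>)"
      by (simp add: mult_sgn_self sum_distrib_left)
    finally show ?thesis .
  qed
  ultimately show ?thesis
    by (intro exI[of _ V]) (simp add: norm1_kron_inv_def sum_distrib_left)
qed

lemma CA_iff:
  "CA S P Gm t N lam nu V \<longleftrightarrow>
   (\<forall>k\<in>{t+1..t+N}. \<forall>i. dual_feas Gm lam nu i k \<and>
      (\<Sum>l\<in>{t..<t+N}. Zca S P Gm t N lam i k l \<bullet> V l) < Yca S P Gm t lam nu i k)"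
proof -
  have "lam i k \<bullet> ((gG Gm ** transpose (gR Gm k)) *v
            (gC Gm *v (xstate S P t V k - ostate S t V k i) + gc Gm) + gg Gm)
        < - (nu i k \<bullet> ggi Gm i) \<longleftrightarrow>
      (\<Sum>l\<in>{t..<t+N}. Zca S P Gm t N lam i k l \<bullet> V l) < Yca S P Gm t lam nu i k"
    if k: "k \<in> {t+1..t+N}" for k i
  proof -
    have r: "lam i k \<bullet> ((gG Gm ** transpose (gR Gm k)) *v (gC Gm *v (xstate S P t V k - ostate S t V k i)))
        = lam i k \<bullet> ((gG Gm ** transpose (gR Gm k)) *v (gC Gm *v (xbar S P t k - obar S t k i)))
          + (\<Sum>l\<in>{t..<t+N}. Zca S P Gm t N lam i k l \<bullet> V l)"
      using Zca_rep[of t k N lam i Gm S P] k by auto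
    show ?thesis
      by (simp add: matrix_vector_right_distrib inner_add_right r Yca_def) linarith
  qed
  then show ?thesis unfolding CA_def by auto
qed

lemma XU_iff:
  "XU S P Fx Fu f J t N V \<longleftrightarrow>
   (\<forall>k\<in>{t..<t+N}. \<forall>j\<in>{1..J}.
      (\<Sum>l\<in>{t..<t+N}. Zxu S P Fx Fu t N j k l \<bullet> V l) \<le> Yxu S P Fx Fu f t j k)"
proof -
  have "Fx j \<bullet> xstate S P t V (Suc k) + Fu j \<bullet> ctrl S P t V k \<le> f j \<longleftrightarrow>
      (\<Sum>l\<in>{t..<t+N}. Zxu S P Fx Fu t N j k l \<bullet> V l) \<le> Yxu S P Fx Fu f t j k"
    if k: "k \<in> {t..<t+N}" for k j
  proof -
    have r: "Fx j \<bullet> xstate S P t V (Suc k) + Fu j \<bullet> ctrl S P t V k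
        = Fx j \<bullet> xbar S P t (Suc k) + Fu j \<bullet> ph P k + (\<Sum>l\<in>{t..<t+N}. Zxu S P Fx Fu t N j k l \<bullet> V l)"
      using Zxu_rep[of t k N Fx j S P Fu] k by auto
    show ?thesis by (simp add: r Yxu_def) linarith
  qed
  then show ?thesis unfolding XU_def by auto
qed

lemma Suc_range: "(\<forall>k\<in>{t+1..t+N}. Q k) \<longleftrightarrow> (\<forall>k\<in>{t..<t+N}. Q (Suc k))"
  by (auto, metis Suc_le_eq add_Suc_right atLeastLessThan_iff le_add_diff_inverse2
      less_Suc_eq_le not_less_eq_eq plus_1_eq_Suc Suc_diff_Suc)

lemma part1:
  fixes S :: "('x::finite, 'u::finite, 'm::finite, 'e::finite) dyn"
    and P :: "('x, 'u, 'm) policy"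
    and Gm :: "('x, 'n::finite, 'l::finite, 'm) geo"
    and Gam :: "real^('x + 'm \<times> 'e)^('x + 'm \<times> 'e)"
  assumes inv: "invertible Gam" and gp: "\<gamma> > 0"
  shows "(\<forall>V. (\<forall>l\<in>{t..<t+N}. infnorm (Gam *v V l) \<le> \<gamma>) \<longrightarrow>
            CA S P Gm t N lam nu V \<and> XU S P Fx Fu f J t N V)
      \<longleftrightarrow>
      (\<forall>k\<in>{t..<t+N}.
         (\<forall>i. dual_feas Gm lam nu i (Suc k) \<and>
              Yca S P Gm t lam nu i (Suc k) > \<gamma> * norm1_kron_inv Gam t N (Zca S P Gm t N lam i (Suc k))) \<and>
         (\<forall>j\<in>{1..J}. Yxu S P Fx Fu f t j k - \<gamma> * norm1_kron_inv Gam t N (Zxu S P Fx Fu t N j k) \<ge> 0))"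
  (is "?L \<longleftrightarrow> ?R")
proof
  assume L: ?L
  show ?R
  proof (intro ballI conjI allI)
    fix k i assume k: "k \<in> {t..<t+N}"
    have "\<forall>l\<in>{t..<t+N}. infnorm (Gam *v (\<lambda>l. 0) l) \<le> \<gamma>" using gp by (simp add: infnorm_0 less_imp_le)
    then have "CA S P Gm t N lam nu (\<lambda>l. 0)" using L[rule_format, of "\<lambda>l. 0"] by blast
    then show "dual_feas Gm lam nu i (Suc k)" using k unfolding CA_iff Suc_range by auto
    obtain V where V: "\<forall>l\<in>{t..<t+N}. infnorm (Gam *v V l) \<le> \<gamma>"
      "(\<Sum>l\<in>{t..<t+N}. Zca S P Gm t N lam i (Suc k) l \<bullet> V l) = \<gamma> * norm1_kron_inv Gam t N (Zca S P Gm t N lam i (Suc k))"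
      using box_attain[OF inv, of \<gamma> t N "Zca S P Gm t N lam i (Suc k)"] gp by auto
    have "CA S P Gm t N lam nu V" using L V(1) by auto
    then have "(\<Sum>l\<in>{t..<t+N}. Zca S P Gm t N lam i (Suc k) l \<bullet> V l) < Yca S P Gm t lam nu i (Suc k)"
      using k unfolding CA_iff Suc_range by blast
    then show "Yca S P Gm t lam nu i (Suc k) > \<gamma> * norm1_kron_inv Gam t N (Zca S P Gm t N lam i (Suc k))"
      using V(2) by simp
  next
    fix k j assume k: "k \<in> {t..<t+N}" and j: "j \<in> {1..J}"
    obtain V where V: "\<forall>l\<in>{t..<t+N}. infnorm (Gam *v V l) \<le> \<gamma>"
      "(\<Sum>l\<in>{t..<t+N}. Zxu S P Fx Fu t N j k l \<bullet> V l) = \<gamma> * norm1_kron_inv Gam t N (Zxu S P Fx Fu t N j k)"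
      using box_attain[OF inv, of \<gamma> t N "Zxu S P Fx Fu t N j k"] gp by auto
    have "XU S P Fx Fu f J t N V" using L V(1) by auto
    then have "(\<Sum>l\<in>{t..<t+N}. Zxu S P Fx Fu t N j k l \<bullet> V l) \<le> Yxu S P Fx Fu f t j k"
      using k j unfolding XU_iff by blast
    then show "Yxu S P Fx Fu f t j k - \<gamma> * norm1_kron_inv Gam t N (Zxu S P Fx Fu t N j k) \<ge> 0"
      using V(2) by simp
  qed
next
  assume R: ?R
  show ?L
  proof (intro allI impI conjI)
    fix V assume V: "\<forall>l\<in>{t..<t+N}. infnorm (Gam *v V l) \<le> \<gamma>"
    show "CA S P Gm t N lam nu V" unfolding CA_iff Suc_range
    proof (intro ballI allI conjI)
      fix k i assume k: "k \<in> {t..<t+N}"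
      show "dual_feas Gm lam nu i (Suc k)" using R k by auto
      have "(\<Sum>l\<in>{t..<t+N}. Zca S P Gm t N lam i (Suc k) l \<bullet> V l) \<le> \<gamma> * norm1_kron_inv Gam t N (Zca S P Gm t N lam i (Suc k))"
        by (rule box_bound[OF inv V])
      moreover have "\<gamma> * norm1_kron_inv Gam t N (Zca S P Gm t N lam i (Suc k)) < Yca S P Gm t lam nu i (Suc k)"
        using R k by blast
      ultimately show "(\<Sum>l\<in>{t..<t+N}. Zca S P Gm t N lam i (Suc k) l \<bullet> V l) < Yca S P Gm t lam nu i (Suc k)"
        by linarith
    qed
    show "XU S P Fx Fu f J t N V" unfolding XU_iff
    proof (intro ballI)
      fix k j assume k: "k \<in> {t..<t+N}" and j: "j \<in> {1..J}"
      have "(\<Sum>l\<in>{t..<t+N}. Zxu S P Fx Fu t N j k l \<bullet> V l) \<le> \<gamma> * norm1_kron_inv Gam t N (Zxu S P Fx Fu t N j k)"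
        by (rule box_bound[OF inv V])
      moreover have "0 \<le> Yxu S P Fx Fu f t j k - \<gamma> * norm1_kron_inv Gam t N (Zxu S P Fx Fu t N j k)"
        using R k j by blast
      ultimately show "(\<Sum>l\<in>{t..<t+N}. Zxu S P Fx Fu t N j k l \<bullet> V l) \<le> Yxu S P Fx Fu f t j k"
        by linarith
    qed
  qed
qed

lemma sym_dot: assumes "transpose S = S"
  shows "(x::real^'d::finite) \<bullet> (S *v y) = (S *v x) \<bullet> y"
proof -
  have "x v* S = S *v x" using vector_transpose_matrix[of x S] assms by simp
  then show ?thesis using dot_mv[of x S y] by simp
qed

lemma quad_zero:
  fixes a b :: real
  assumes h: "\<forall>s. 2 * s * a \<le> s^2 * b" shows "a = 0"
proof (rule ccontr)
  assume a: "a \<noteq> 0"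
  define c where "c = \<bar>b\<bar> + 1"
  have c: "c > 0" unfolding c_def by simp
  define s where "s = a / c"
  have h1: "2 * s * a \<le> s^2 * b" using h by blast
  have "2 * s * a*c^2 \<le> s^2 * b*c^2" using mult_right_mono[OF h1, of "c^2"] by simp
  moreover have "2 * s * a*c^2 = 2*a^2*c" using c by (simp add: s_def power2_eq_square field_simps)
  moreover have "s^2 * b*c^2 = a^2*b" using c by (simp add: s_def power2_eq_square field_simps)
  ultimately have "2*a^2*c \<le> a^2*b" by linarith
  then have "a^2 * (2*c) \<le> a^2 * b" by (simp add: mult_ac)
  moreover have "a^2 > 0" using a by simp
  ultimately have "2*c \<le> b" by simp
  then show False using c_def abs_ge_self[of b] by linarith
qed

lemma psd_null:
  assumes "psd R" "(x::real^'d::finite) \<bullet> (R *v x) = 0"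
  shows "R *v x = 0"
proof -
  have sym: "transpose R = R" and pos: "\<And>v. 0 \<le> v \<bullet> (R *v v)" using assms(1) unfolding psd_def by auto
  have "y \<bullet> (R *v x) = 0" for y
  proof -
    have "\<forall>s. 2 * s * (-(y \<bullet> (R *v x))) \<le> s^2 * (y \<bullet> (R *v y))"
    proof
      fix s :: real
      have "0 \<le> (x + s *\<^sub>R y) \<bullet> (R *v (x + s *\<^sub>R y))" by (rule pos)
      also have "\<dots> = x \<bullet> (R *v x) + s * (x \<bullet> (R *v y)) + s * (y \<bullet> (R *v x)) + s^2 * (y \<bullet> (R *v y))"
        by (simp add: matrix_vector_right_distrib matrix_vector_mult_scaleR inner_add_left inner_add_right
            power2_eq_square algebra_simps)
      also have "x \<bullet> (R *v y) = y \<bullet> (R *v x)" using sym_dot[OF sym, of x y] by (simp add: inner_commute)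
      finally show "2 * s * (-(y \<bullet> (R *v x))) \<le> s^2 * (y \<bullet> (R *v y))" using assms(2) by simp
    qed
    from quad_zero[OF this] show ?thesis by simp
  qed
  from this[of "R *v x"] show ?thesis by simp
qed

lemma eig_exists:
  fixes S :: "real^'d::finite^'d"
  assumes sym: "transpose S = S" and W: "subspace W" and w: "w \<in> W" "w \<noteq> 0"
    and inv: "\<forall>x\<in>W. S *v x \<in> W"
  shows "\<exists>x\<in>W. norm x = 1 \<and> S *v x = (x \<bullet> (S *v x)) *\<^sub>R x"
proof -
  define K where "K = W \<inter> sphere 0 1"
  have "compact K" unfolding K_def
    by (intro closed_Int_compact closed_subspace W compact_sphere)
  moreover have "w /\<^sub>R norm w \<in> K" using w W unfolding K_def
    by (auto simp: subspace_scale)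
  moreover have "continuous_on K (\<lambda>x. x \<bullet> (S *v x))"
    by (intro continuous_intros)
  ultimately obtain x where x: "x \<in> K" and xmax: "\<forall>y\<in>K. y \<bullet> (S *v y) \<le> x \<bullet> (S *v x)"
    using continuous_attains_sup[of K "\<lambda>x. x \<bullet> (S *v x)"] by blast
  define lam where "lam = x \<bullet> (S *v x)"
  have xW: "x \<in> W" and nx: "norm x = 1" using x unfolding K_def by auto
  have xx: "x \<bullet> x = 1" using nx by (simp add: norm_eq_1)
  have bound: "y \<bullet> (S *v y) \<le> lam * (y \<bullet> y)" if y: "y \<in> W" for y
  proof (cases "y = 0")
    case True then show ?thesis by simp
  next
    case False
    have "(1 / norm y) *\<^sub>R y \<in> K" using y False W unfolding K_def by (auto simp: subspace_scale)
    then have "((1 / norm y) *\<^sub>R y) \<bullet> (S *v ((1 / norm y) *\<^sub>R y)) \<le> lam" using xmax lam_def by blast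
    then have "(1 / norm y)^2 * (y \<bullet> (S *v y)) \<le> lam"
      by (simp add: matrix_vector_mult_scaleR power2_eq_square mult_ac)
    moreover have "(1 / norm y)^2 = 1 / (y \<bullet> y)" using False
      by (simp add: power2_norm_eq_inner[symmetric] power_one_over)
    moreover have "y \<bullet> y > 0" using False by simp
    ultimately show ?thesis by (simp add: field_simps)
  qed
  have orth: "v \<bullet> (S *v x - lam *\<^sub>R x) = 0" if v: "v \<in> W" for v
  proof -
    have "\<forall>s. 2 * s * (v \<bullet> (S *v x) - lam * (x \<bullet> v)) \<le> s^2 * (lam * (v \<bullet> v) - v \<bullet> (S *v v))"
    proof
      fix s :: real
      have "x + s *\<^sub>R v \<in> W" using W xW v by (simp add: subspace_add subspace_scale)
      from bound[OF this]
      have "(x + s *\<^sub>R v) \<bullet> (S *v (x + s *\<^sub>R v)) \<le> lam * ((x + s *\<^sub>R v) \<bullet> (x + s *\<^sub>R v))" .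
      moreover have "(x + s *\<^sub>R v) \<bullet> (S *v (x + s *\<^sub>R v)) =
          lam + s * (x \<bullet> (S *v v)) + s * (v \<bullet> (S *v x)) + s^2 * (v \<bullet> (S *v v))"
        by (simp add: lam_def matrix_vector_right_distrib matrix_vector_mult_scaleR inner_add_left inner_add_right
            power2_eq_square algebra_simps)
      moreover have "x \<bullet> (S *v v) = v \<bullet> (S *v x)" using sym_dot[OF sym, of x v] by (simp add: inner_commute)
      moreover have "(x + s *\<^sub>R v) \<bullet> (x + s *\<^sub>R v) = 1 + 2 * s * (x \<bullet> v) + s^2 * (v \<bullet> v)"
        using xx by (simp add: inner_add_left inner_add_right power2_eq_square algebra_simps inner_commute)
      ultimately have "lam + 2 * (s * (v \<bullet> (S *v x))) + s^2 * (v \<bullet> (S *v v))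
          \<le> lam * (1 + 2 * s * (x \<bullet> v) + s^2 * (v \<bullet> v))" by simp
      moreover have "lam * (1 + 2 * s * (x \<bullet> v) + s^2 * (v \<bullet> v)) =
          lam + 2 * (s * (lam * (x \<bullet> v))) + s^2 * (lam * (v \<bullet> v))" by (simp add: algebra_simps)
      moreover have "2 * s * (v \<bullet> (S *v x) - lam * (x \<bullet> v)) =
          2 * (s * (v \<bullet> (S *v x))) - 2 * (s * (lam * (x \<bullet> v)))" by (simp add: algebra_simps)
      moreover have "s^2 * (lam * (v \<bullet> v) - v \<bullet> (S *v v)) =
          s^2 * (lam * (v \<bullet> v)) - s^2 * (v \<bullet> (S *v v))" by (simp add: algebra_simps)
      ultimately show "2 * s * (v \<bullet> (S *v x) - lam * (x \<bullet> v)) \<le> s^2 * (lam * (v \<bullet> v) - v \<bullet> (S *v v))"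
        by linarith
    qed
    from quad_zero[OF this] show ?thesis by (simp add: inner_diff_right inner_commute)
  qed
  have "S *v x - lam *\<^sub>R x \<in> W" using W xW inv by (simp add: subspace_diff subspace_scale)
  from orth[OF this] have "S *v x - lam *\<^sub>R x = 0" by simp
  then show ?thesis using xW nx lam_def by (intro bexI[of _ x]) auto
qed

definition eigbasis :: "real^'d::finite^'d \<Rightarrow> (real^'d) set \<Rightarrow> (real^'d) set \<Rightarrow> bool" where
  "eigbasis S W B \<longleftrightarrow> finite B \<and> B \<subseteq> W \<and> span B = W \<and> pairwise orthogonal B \<and>
     (\<forall>b\<in>B. norm b = 1 \<and> (\<exists>mu. S *v b = mu *\<^sub>R b))"

lemma eigbasis_eig:
  assumes "eigbasis S W B" "b \<in> B"
  shows "S *v b = (b \<bullet> (S *v b)) *\<^sub>R b"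
proof -
  obtain mu where mu: "S *v b = mu *\<^sub>R b" and n: "norm b = 1"
    using assms unfolding eigbasis_def by blast
  have "b \<bullet> (S *v b) = mu" unfolding mu using n by (simp add: norm_eq_1)
  then show ?thesis using mu by simp
qed

lemma spectral_sub:
  fixes S :: "real^'d::finite^'d"
  assumes sym: "transpose S = S"
  shows "subspace W \<Longrightarrow> (\<forall>x\<in>W. S *v x \<in> W) \<Longrightarrow> \<exists>B. eigbasis S W B"
proof (induction "dim W" arbitrary: W rule: less_induct)
  case less
  show ?case
  proof (cases "W \<subseteq> {0}")
    case True
    then have "W = {0}" using less.prems(1) subspace_0 by blast
    then show ?thesis unfolding eigbasis_def by (intro exI[of _ "{}"]) auto
  next
    case False
    then obtain w where w: "w \<in> W" "w \<noteq> 0" by blast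
    obtain x where xW: "x \<in> W" and nx: "norm x = 1" and ex: "S *v x = (x \<bullet> (S *v x)) *\<^sub>R x"
      using eig_exists[OF sym less.prems(1) w less.prems(2)] by blast
    have xx: "x \<bullet> x = 1" using nx by (simp add: norm_eq_1)
    define W' where "W' = W \<inter> {y. x \<bullet> y = 0}"
    have sW': "subspace W'" unfolding W'_def
      by (intro subspace_inter less.prems(1)) (auto simp: subspace_def inner_add_right)
    have iW': "\<forall>y\<in>W'. S *v y \<in> W'"
    proof
      fix y assume y: "y \<in> W'"
      have "x \<bullet> (S *v y) = (S *v x) \<bullet> y" by (rule sym_dot[OF sym])
      also have "\<dots> = (x \<bullet> (S *v x)) * (x \<bullet> y)" by (subst ex) simp
      also have "\<dots> = 0" using y unfolding W'_def by simp
      finally show "S *v y \<in> W'" using y less.prems(2) unfolding W'_def by auto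
    qed
    have "x \<notin> W'" using xx unfolding W'_def by simp
    moreover have "W' \<subseteq> W" unfolding W'_def by blast
    ultimately have "W' \<subset> W" using xW by blast
    then have "span W' \<subset> span W"
      by (simp only: span_eq_iff[THEN iffD2, OF sW'] span_eq_iff[THEN iffD2, OF less.prems(1)])
    then have "dim W' < dim W" by (rule dim_psubset)
    from less.hyps[OF this sW' iW'] obtain B' where B': "eigbasis S W' B'" by blast
    have B'W': "B' \<subseteq> W'" "span B' = W'" "finite B'" "pairwise orthogonal B'"
      using B' unfolding eigbasis_def by blast+
    have "span (insert x B') = W"
    proof
      show "span (insert x B') \<subseteq> W"
        using xW B'W'(1) less.prems(1) unfolding W'_def by (intro span_minimal) auto
      show "W \<subseteq> span (insert x B')"
      proof
        fix y assume y: "y \<in> W"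
        have "y - (x \<bullet> y) *\<^sub>R x \<in> W'" unfolding W'_def
          using y xW less.prems(1) xx by (auto simp: subspace_diff subspace_scale inner_diff_right)
        then have "y - (x \<bullet> y) *\<^sub>R x \<in> span (insert x B')"
          using B'W'(2) span_mono[of B' "insert x B'"] by auto
        moreover have "(x \<bullet> y) *\<^sub>R x \<in> span (insert x B')" by (intro span_mul span_base) simp
        ultimately have "(y - (x \<bullet> y) *\<^sub>R x) + (x \<bullet> y) *\<^sub>R x \<in> span (insert x B')" by (rule span_add)
        then show "y \<in> span (insert x B')" by simp
      qed
    qed
    moreover have "pairwise orthogonal (insert x B')"
      using B'W'(1,4) unfolding W'_def
      by (auto simp: pairwise_insert orthogonal_def inner_commute)
    moreover have "\<forall>b\<in>insert x B'. norm b = 1 \<and> (\<exists>mu. S *v b = mu *\<^sub>R b)"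
    proof
      fix b assume "b \<in> insert x B'"
      then show "norm b = 1 \<and> (\<exists>mu. S *v b = mu *\<^sub>R b)"
      proof
        assume "b = x" then show ?thesis using nx ex by blast
      next
        assume "b \<in> B'" then show ?thesis using B' unfolding eigbasis_def by blast
      qed
    qed
    moreover have "insert x B' \<subseteq> W" using xW B'W'(1) unfolding W'_def by blast
    moreover have "finite (insert x B')" using B'W'(3) by simp
    ultimately show ?thesis unfolding eigbasis_def by blast
  qed
qed

lemma ortho_coef:
  assumes "eigbasis S W B" "b \<in> B"
  shows "b \<bullet> (\<Sum>b'\<in>B. c b' *\<^sub>R b') = c b"
proof -
  have fin: "finite B" and po: "pairwise orthogonal B" and n: "norm b = 1"
    using assms unfolding eigbasis_def by blast+
  have "b \<bullet> (\<Sum>b'\<in>B. c b' *\<^sub>R b') = (\<Sum>b'\<in>B. c b' * (b \<bullet> b'))" by (simp add: inner_sum_right)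
  also have "\<dots> = c b * (b \<bullet> b) + (\<Sum>b'\<in>B - {b}. c b' * (b \<bullet> b'))"
    by (subst sum.remove[OF fin assms(2)]) simp
  also have "(\<Sum>b'\<in>B - {b}. c b' * (b \<bullet> b')) = 0"
    using po assms(2) by (intro sum.neutral) (auto simp: pairwise_def orthogonal_def)
  finally show ?thesis using n by (simp add: norm_eq_1)
qed

lemma ortho_expand:
  assumes "eigbasis S UNIV B"
  shows "x = (\<Sum>b\<in>B. (b \<bullet> x) *\<^sub>R b)"
proof -
  define y where "y = x - (\<Sum>b\<in>B. (b \<bullet> x) *\<^sub>R b)"
  have "orthogonal y b" if b: "b \<in> B" for b
  proof -
    have "b \<bullet> (\<Sum>b\<in>B. (b \<bullet> x) *\<^sub>R b) = b \<bullet> x" by (rule ortho_coef[OF assms b])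
    then have "b \<bullet> y = 0" unfolding y_def inner_diff_right by simp
    then have "y \<bullet> b = 0" by (simp only: inner_commute)
    then show ?thesis unfolding orthogonal_def .
  qed
  moreover have "y \<in> span B" using assms unfolding eigbasis_def by blast
  ultimately have "orthogonal y y" using orthogonal_to_span[of y B y] by blast
  then have "y = 0" unfolding orthogonal_def by simp
  then show ?thesis unfolding y_def by (simp only: right_minus_eq)
qed

lemma psd_sqrt_exists:
  fixes Sig :: "real^'d::finite^'d"
  assumes "psd Sig"
  shows "\<exists>R. psd R \<and> R ** R = Sig"
proof -
  have sym: "transpose Sig = Sig" and pos: "\<And>v. 0 \<le> v \<bullet> (Sig *v v)" using assms unfolding psd_def by auto
  obtain B where B: "eigbasis Sig UNIV B" using spectral_sub[OF sym, of UNIV] by auto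
  have fin: "finite B" using B unfolding eigbasis_def by blast
  have eig: "\<And>b. b \<in> B \<Longrightarrow> Sig *v b = (b \<bullet> (Sig *v b)) *\<^sub>R b"
    using eigbasis_eig[OF B] by blast
  define mu where "mu b = b \<bullet> (Sig *v b)" for b
  have mu0: "mu b \<ge> 0" for b unfolding mu_def by (rule pos)
  define R :: "real^'d^'d" where "R = (\<chi> i j. \<Sum>b\<in>B. sqrt (mu b) * (b $ i * b $ j))"
  have Rv: "R *v x = (\<Sum>b\<in>B. (sqrt (mu b) * (b \<bullet> x)) *\<^sub>R b)" for x
  proof -
    have "(R *v x) $ i = (\<Sum>b\<in>B. (sqrt (mu b) * (b \<bullet> x)) * b $ i)" for i
    proof -
      have "(R *v x) $ i = (\<Sum>j\<in>UNIV. \<Sum>b\<in>B. sqrt (mu b) * (b $ i * b $ j) * x $ j)"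
        by (simp add: R_def matrix_vector_mult_def sum_distrib_right)
      also have "\<dots> = (\<Sum>b\<in>B. \<Sum>j\<in>UNIV. sqrt (mu b) * (b $ i * b $ j) * x $ j)" by (rule sum.swap)
      also have "\<dots> = (\<Sum>b\<in>B. (sqrt (mu b) * (b \<bullet> x)) * b $ i)"
        by (simp add: inner_vec_def sum_distrib_left sum_distrib_right mult_ac)
      finally show ?thesis .
    qed
    then show ?thesis by (simp add: vec_eq_iff sum_component)
  qed
  have symR: "transpose R = R" unfolding R_def transpose_def by (simp add: vec_eq_iff mult.commute)
  have posR: "0 \<le> v \<bullet> (R *v v)" for v
  proof -
    have "v \<bullet> (R *v v) = (\<Sum>b\<in>B. sqrt (mu b) * (b \<bullet> v)^2)"
      unfolding Rv by (simp add: inner_sum_right inner_commute power2_eq_square mult_ac)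
    also have "\<dots> \<ge> 0" by (intro sum_nonneg mult_nonneg_nonneg) (auto simp: mu0)
    finally show ?thesis .
  qed
  have "(R ** R) *v x = Sig *v x" for x
  proof -
    have "(R ** R) *v x = R *v (R *v x)" by (simp add: matrix_vector_mul_assoc)
    also have "\<dots> = (\<Sum>b\<in>B. (mu b * (b \<bullet> x)) *\<^sub>R b)"
    proof -
      have "b \<bullet> (R *v x) = sqrt (mu b) * (b \<bullet> x)" if "b \<in> B" for b
        unfolding Rv by (rule ortho_coef[OF B that])
      then show ?thesis unfolding Rv[of "R *v x"]
        by (intro sum.cong) (auto simp: mu0 real_sqrt_mult[symmetric])
    qed
    also have "\<dots> = (\<Sum>b\<in>B. (b \<bullet> x) *\<^sub>R (Sig *v b))"
    proof (rule sum.cong)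
      fix b assume b: "b \<in> B"
      show "(mu b * (b \<bullet> x)) *\<^sub>R b = (b \<bullet> x) *\<^sub>R (Sig *v b)"
        unfolding mu_def by (subst eig[OF b]) (simp add: mult.commute)
    qed simp
    also have "\<dots> = Sig *v (\<Sum>b\<in>B. (b \<bullet> x) *\<^sub>R b)"
      by (simp add: mv_sum matrix_vector_mult_scaleR)
    also have "(\<Sum>b\<in>B. (b \<bullet> x) *\<^sub>R b) = x" using ortho_expand[OF B] by simp
    finally show ?thesis .
  qed
  then have "R ** R = Sig" by (simp add: matrix_eq)
  then show ?thesis using symR posR unfolding psd_def by blast
qed

lemma psd_sqrt_unique:
  fixes R Q :: "real^'d::finite^'d"
  assumes R: "psd R" and Q: "psd Q" and e: "R ** R = Q ** Q"
  shows "R = Q"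
proof -
  define D where "D = R - Q"
  have symR: "transpose R = R" and symQ: "transpose Q = Q" using R Q unfolding psd_def by auto
  have symD: "transpose D = D" unfolding D_def using symR symQ
    by (simp add: transpose_def vec_eq_iff)
  obtain B where B: "eigbasis D UNIV B" using spectral_sub[OF symD, of UNIV] by auto
  have zero: "D *v b = 0" if b: "b \<in> B" for b
  proof -
    define mu where "mu = b \<bullet> (D *v b)"
    have eb: "D *v b = mu *\<^sub>R b" using eigbasis_eig[OF B b] unfolding mu_def .
    have nb: "norm b = 1" using B b unfolding eigbasis_def by blast
    have "R *v (R *v b) = Q *v (Q *v b)" using e by (simp add: matrix_vector_mul_assoc)
    then have "R *v (D *v b) + D *v (Q *v b) = 0"
      unfolding D_def
      by (simp add: matrix_vector_mult_diff_rdistrib matrix_vector_mult_diff_distrib)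
    then have "b \<bullet> (R *v (D *v b)) + b \<bullet> (D *v (Q *v b)) = 0" by (metis inner_add_right inner_zero_right)
    moreover have "b \<bullet> (D *v (Q *v b)) = (D *v b) \<bullet> (Q *v b)" by (rule sym_dot[OF symD])
    ultimately have "mu * (b \<bullet> (R *v b) + b \<bullet> (Q *v b)) = 0"
      unfolding eb by (simp add: matrix_vector_mult_scaleR algebra_simps)
    moreover have "mu = 0"
    proof (rule ccontr)
      assume m: "mu \<noteq> 0"
      with \<open>mu * _ = 0\<close> have "b \<bullet> (R *v b) + b \<bullet> (Q *v b) = 0" by simp
      moreover have "0 \<le> b \<bullet> (R *v b)" "0 \<le> b \<bullet> (Q *v b)" using R Q unfolding psd_def by auto
      ultimately have "b \<bullet> (R *v b) = 0" "b \<bullet> (Q *v b) = 0" by linarith+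
      then have "R *v b = 0" "Q *v b = 0" using psd_null R Q by blast+
      then have "D *v b = 0" unfolding D_def by (simp add: matrix_vector_mult_diff_rdistrib)
      then have "mu *\<^sub>R b = 0" using eb by simp
      then show False using m nb by auto
    qed
    ultimately show ?thesis using eb by simp
  qed
  have "D *v x = 0 *v x" for x
  proof -
    have "D *v x = D *v (\<Sum>b\<in>B. (b \<bullet> x) *\<^sub>R b)" using ortho_expand[OF B] by metis
    also have "\<dots> = 0" by (simp add: mv_sum matrix_vector_mult_scaleR zero)
    finally show ?thesis by simp
  qed
  then have "D = 0" by (simp add: matrix_eq)
  then show ?thesis unfolding D_def by simp
qed

lemma psd_sqrt_props:
  fixes Sig :: "real^'d::finite^'d"
  assumes "psd Sig"
  shows "psd (psd_sqrt Sig) \<and> psd_sqrt Sig ** psd_sqrt Sig = Sig"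
proof -
  have "\<exists>!R. psd R \<and> R ** R = Sig"
    using psd_sqrt_exists[OF assms] psd_sqrt_unique by metis
  then show ?thesis unfolding psd_sqrt_def by (rule theI')
qed

lemma norm_sqrt_quad:
  fixes Sig :: "real^'d::finite^'d"
  assumes "psd Sig"
  shows "(norm (z v* psd_sqrt Sig))^2 = z \<bullet> (Sig *v z)"
proof -
  define R where "R = psd_sqrt Sig"
  have R: "psd R" "R ** R = Sig" using psd_sqrt_props[OF assms] unfolding R_def by auto
  have symR: "transpose R = R" using R unfolding psd_def by auto
  have "z v* R = R *v z" using vector_transpose_matrix[of z R] symR by simp
  then have "(norm (z v* R))^2 = (R *v z) \<bullet> (R *v z)" by (simp add: power2_norm_eq_inner)
  also have "\<dots> = z \<bullet> (R *v (R *v z))" using sym_dot[OF symR, of z "R *v z"] by simp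
  also have "\<dots> = z \<bullet> (Sig *v z)" using R(2) by (simp add: matrix_vector_mul_assoc)
  finally show ?thesis unfolding R_def .
qed

abbreviation "SND \<equiv> density lborel std_normal_density"

lemma SND_real_dist: "real_distribution SND"
  unfolding real_distribution_def real_distribution_axioms_def
  using prob_space_normal_density by simp

interpretation snd: real_distribution SND by (rule SND_real_dist)

lemma SND_single: "measure SND {x} = 0"
proof -
  have "{x} \<in> null_sets SND"
  proof (subst null_sets_density_iff)
    have "AE y in lborel. y \<in> {x} \<longrightarrow> ennreal (std_normal_density y) = 0"
      using AE_lborel_singleton[of x] by eventually_elim auto
    then show "{x} \<in> sets lborel \<and> (AE y in lborel. y \<in> {x} \<longrightarrow> ennreal (std_normal_density y) = 0)"
      by simp
  qed simp
  then show ?thesis by (simp add: measure_def null_setsD1)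
qed

lemma SND_cont: "isCont std_normal_cdf x"
  unfolding std_normal_cdf_def by (simp add: snd.isCont_cdf SND_single)

lemma SND_Ioc_pos:
  assumes "a < b" shows "measure SND {a<..b} > 0"
proof -
  define m where "m = max (a^2) (b^2)"
  define c where "c = (1 / sqrt (2 * pi)) * exp (- m / 2)"
  have cpos: "c > 0" unfolding c_def by simp
  have lb: "c \<le> std_normal_density x" if "x \<in> {a<..b}" for x
  proof -
    have "x^2 \<le> m"
    proof (cases "x \<ge> 0")
      case True
      then have "x^2 \<le> b^2" using that by (intro power_mono) auto
      then show ?thesis unfolding m_def by simp
    next
      case False
      then have "(-x)^2 \<le> (-a)^2" using that by (intro power_mono) auto
      then show ?thesis unfolding m_def by simp
    qed
    then have "exp (- m / 2) \<le> exp (- (x^2) / 2)" by simp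
    then show ?thesis unfolding c_def std_normal_density_def
      by (intro mult_left_mono) auto
  qed
  have "ennreal c * ennreal (b - a) = (\<integral>\<^sup>+x. ennreal c * indicator {a<..b} x \<partial>lborel)"
    using assms by (simp add: nn_integral_cmult_indicator)
  also have "\<dots> \<le> (\<integral>\<^sup>+x. ennreal (std_normal_density x) * indicator {a<..b} x \<partial>lborel)"
    by (intro nn_integral_mono) (auto simp: indicator_def lb)
  also have "\<dots> = emeasure SND {a<..b}" by (simp add: emeasure_density)
  finally have "emeasure SND {a<..b} > 0"
    using cpos assms by (auto simp: ennreal_mult'[symmetric] intro: less_le_trans[rotated])
  then show ?thesis by (simp add: snd.emeasure_eq_measure)
qed

lemma SND_strict_mono: "a < b \<Longrightarrow> std_normal_cdf a < std_normal_cdf b"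
  unfolding std_normal_cdf_def using snd.cdf_diff_eq[of a b] SND_Ioc_pos[of a b] by simp

lemma SND_quantile:
  assumes "0 < p" "p < 1"
  shows "std_normal_cdf (std_normal_quantile p) = p"
proof -
  have "\<forall>\<^sub>F x in at_bot. std_normal_cdf x < p"
    using snd.cdf_lim_at_bot assms(1) unfolding std_normal_cdf_def by (rule order_tendstoD)
  then obtain a where a: "std_normal_cdf a < p" by (auto simp: eventually_at_bot_linorder)
  have "\<forall>\<^sub>F x in at_top. p < std_normal_cdf x"
    using snd.cdf_lim_at_top_prob assms(2) unfolding std_normal_cdf_def by (rule order_tendstoD)
  then obtain b where b: "p < std_normal_cdf b" by (auto simp: eventually_at_top_linorder)
  have ab: "a \<le> b"
  proof (rule ccontr)
    assume "\<not> a \<le> b" then have "std_normal_cdf b < std_normal_cdf a" by (intro SND_strict_mono) simp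
    then show False using a b by simp
  qed
  have "continuous_on {a..b} std_normal_cdf" using SND_cont by (simp add: continuous_at_imp_continuous_on)
  then obtain x where "std_normal_cdf x = p" using IVT'[of std_normal_cdf a p b] a b ab by auto
  moreover have "y = x" if "std_normal_cdf y = p" for y
    using SND_strict_mono[of x y] SND_strict_mono[of y x] that \<open>std_normal_cdf x = p\<close>
    by (cases x y rule: linorder_cases) auto
  ultimately have "\<exists>!x. std_normal_cdf x = p" by blast
  then show ?thesis unfolding std_normal_quantile_def by (rule theI')
qed

lemma gauss_tail:
  assumes P: "prob_space Pm" and G: "centered_gaussian_rv Pm X s2" and p: "0 < p" "p < 1"
  shows "measure Pm {w \<in> space Pm. std_normal_quantile p * sqrt s2 < X w} \<le> 1 - p"
proof -
  interpret prob_space Pm by (rule P)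
  consider (z) "s2 = 0" "X \<in> borel_measurable Pm" "AE w in Pm. X w = 0"
    | (p) "0 < s2" "distributed Pm lborel X (normal_density 0 (sqrt s2))"
    using G unfolding centered_gaussian_rv_def by blast
  then show ?thesis
  proof cases
    case z
    have "measure Pm {w \<in> space Pm. std_normal_quantile p * sqrt s2 < X w} = 0"
      using z by (intro prob_eq_0_AE) (auto elim: AE_mp)
    then show ?thesis using p by simp
  next
    case p
    define \<sigma> where "\<sigma> = sqrt s2"
    have sp: "\<sigma> > 0" using p unfolding \<sigma>_def by simp
    define Z where "Z w = X w / \<sigma>" for w
    have dZ: "distributed Pm lborel Z std_normal_density"
      using normal_standard_normal_convert[OF sp, of X 0] p(2) unfolding Z_def \<sigma>_def by simp
    define q where "q = std_normal_quantile p"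
    have "{w \<in> space Pm. q * \<sigma> < X w} = Z -` {q<..} \<inter> space Pm"
      using sp by (auto simp: Z_def field_simps)
    moreover have "measure (distr Pm lborel Z) {q<..} = measure Pm (Z -` {q<..} \<inter> space Pm)"
      by (rule measure_distr[OF distributed_measurable[OF dZ]]) simp
    ultimately have "measure Pm {w \<in> space Pm. q * \<sigma> < X w} = measure (distr Pm lborel Z) {q<..}"
      by simp
    also have "\<dots> = measure SND {q<..}" by (simp add: distributed_distr_eq_density[OF dZ])
    also have "{q<..} = space SND - {..q}" by auto
    also have "measure SND (space SND - {..q}) = 1 - measure SND {..q}" by (rule snd.prob_compl) simp
    also have "measure SND {..q} = p" using SND_quantile[OF assms(3,4)]
      unfolding std_normal_cdf_def q_def cdf_def by simp
    finally show ?thesis unfolding q_def \<sigma>_def by simp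
  qed
qed

lemma cantelli:
  assumes P: "prob_space Pm" and iX: "integrable Pm X" and iX2: "integrable Pm (\<lambda>w. (X w)^2)"
    and m1: "(\<integral>w. X w \<partial>Pm) = 0" and m2: "(\<integral>w. (X w)^2 \<partial>Pm) = s2" and lp: "0 < lam"
  shows "measure Pm {w \<in> space Pm. lam \<le> X w} \<le> s2 / (s2 + lam^2)"
proof -
  interpret prob_space Pm by (rule P)
  have mX[measurable]: "X \<in> borel_measurable Pm" using iX by (rule borel_measurable_integrable)
  have s0: "0 \<le> s2" unfolding m2[symmetric] by (intro integral_nonneg_AE) auto
  define u where "u = s2 / lam"
  have u0: "0 \<le> u" unfolding u_def using s0 lp by simp
  define c where "c = (lam + u)^2"
  have cp: "0 < c" unfolding c_def using u0 lp by simp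
  have iY: "integrable Pm (\<lambda>w. (X w + u)^2)"
  proof -
    have "(\<lambda>w. (X w + u)^2) = (\<lambda>w. (X w)^2 + 2 * u * X w + u^2)"
      by (simp add: power2_eq_square algebra_simps)
    then show ?thesis using iX iX2 by simp
  qed
  have EY: "(\<integral>w. (X w + u)^2 \<partial>Pm) = s2 + u^2"
  proof -
    have "(\<lambda>w. (X w + u)^2) = (\<lambda>w. ((X w)^2 + (2 * u) * X w) + u^2)"
      by (simp add: power2_eq_square algebra_simps)
    then have "(\<integral>w. (X w + u)^2 \<partial>Pm) = (\<integral>w. ((X w)^2 + (2 * u) * X w) + u^2 \<partial>Pm)" by simp
    also have "\<dots> = (\<integral>w. (X w)^2 + (2 * u) * X w \<partial>Pm) + (\<integral>w. u^2 \<partial>Pm)"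
      by (rule Bochner_Integration.integral_add) (use iX iX2 in auto)
    also have "(\<integral>w. u^2 \<partial>Pm) = u^2" by (simp add: prob_space)
    also have "(\<integral>w. (X w)^2 + (2 * u) * X w \<partial>Pm) = s2 + (2 * u) * 0"
    proof -
      have "(\<integral>w. (X w)^2 + (2 * u) * X w \<partial>Pm) = (\<integral>w. (X w)^2 \<partial>Pm) + (\<integral>w. (2 * u) * X w \<partial>Pm)"
        by (rule Bochner_Integration.integral_add) (use iX iX2 in auto)
      also have "(\<integral>w. (2 * u) * X w \<partial>Pm) = (2 * u) * (\<integral>w. X w \<partial>Pm)" by simp
      finally show ?thesis by (simp add: m1 m2)
    qed
    finally show ?thesis by simp
  qed
  have "measure Pm {w \<in> space Pm. lam \<le> X w} \<le> measure Pm {w \<in> space Pm. c \<le> (X w + u)^2}"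
  proof (rule finite_measure_mono)
    show "{w \<in> space Pm. lam \<le> X w} \<subseteq> {w \<in> space Pm. c \<le> (X w + u)^2}"
      unfolding c_def using u0 lp by (auto intro!: power_mono)
    show "{w \<in> space Pm. c \<le> (X w + u)^2} \<in> sets Pm" by measurable
  qed
  also have "\<dots> \<le> (\<integral>w. (X w + u)^2 \<partial>Pm) / c"
    by (rule integral_Markov_inequality_measure[OF iY _ _ cp]) auto
  also have "\<dots> = (s2 + u^2) / c" using EY by simp
  also have "\<dots> = s2 / (s2 + lam^2)"
  proof -
    have K: "0 < s2 + lam^2" using lp s0 by (simp add: add_nonneg_pos)
    have e1: "lam + u = (s2 + lam^2) / lam" using lp by (simp add: u_def field_simps power2_eq_square)
    have e2: "s2 + u^2 = s2 * (s2 + lam^2) / lam^2" using lp by (simp add: u_def field_simps power2_eq_square)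
    have "(s2 + u^2) / c = (s2 * (s2 + lam^2) / lam^2) / ((s2 + lam^2)^2 / lam^2)"
      unfolding c_def e1 e2 by (simp add: power_divide)
    also have "\<dots> = s2 * (s2 + lam^2) / (s2 + lam^2)^2" using lp by simp
    also have "\<dots> = s2 / (s2 + lam^2)" using K by (simp add: power2_eq_square)
    finally show ?thesis .
  qed
  finally show ?thesis .
qed

lemma ae_zero_of_m2:
  fixes X :: "_ \<Rightarrow> real"
  assumes P: "prob_space Pm" and iX2: "integrable Pm (\<lambda>w. (X w)^2)" and m2: "(\<integral>w. (X w)^2 \<partial>Pm) = 0"
    and mX: "X \<in> borel_measurable Pm"
  shows "measure Pm {w \<in> space Pm. 0 < X w} = 0"
proof -
  interpret prob_space Pm by (rule P)
  have "AE w in Pm. (X w)^2 = 0"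
    using m2 iX2 by (subst integral_nonneg_eq_0_iff_AE[symmetric]) auto
  then show ?thesis by (intro prob_eq_0_AE) (auto elim: AE_mp)
qed

lemma dr_tail_strict:
  assumes P: "prob_space Pm" and iX: "integrable Pm X" and iX2: "integrable Pm (\<lambda>w. (X w)^2)"
    and m1: "(\<integral>w. X w \<partial>Pm) = 0" and m2: "(\<integral>w. (X w)^2 \<partial>Pm) = s2"
    and g: "0 < g" and c: "c > g * sqrt s2"
  shows "measure Pm {w \<in> space Pm. c \<le> X w} \<le> 1 / (1 + g^2)"
proof -
  interpret prob_space Pm by (rule P)
  have s0: "0 \<le> s2" unfolding m2[symmetric] by (intro integral_nonneg_AE) auto
  have cp: "0 < c" using c g s0 by (smt (verit) mult_nonneg_nonneg real_sqrt_ge_zero)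
  have "g^2 * s2 \<le> c^2"
  proof -
    have "(g * sqrt s2)^2 \<le> c^2" using c g s0 by (intro power_mono) auto
    then show ?thesis using s0 by (simp add: power_mult_distrib)
  qed
  moreover have "s2 + c^2 > 0" using s0 cp by (simp add: add_nonneg_pos)
  moreover have "1 + g^2 > 0" using zero_le_power2[of g] by linarith
  ultimately have "s2 / (s2 + c^2) \<le> 1 / (1 + g^2)"
    by (simp add: field_simps)
  then show ?thesis using cantelli[OF P iX iX2 m1 m2 cp] by linarith
qed

lemma dr_tail_weak:
  assumes P: "prob_space Pm" and iX: "integrable Pm X" and iX2: "integrable Pm (\<lambda>w. (X w)^2)"
    and m1: "(\<integral>w. X w \<partial>Pm) = 0" and m2: "(\<integral>w. (X w)^2 \<partial>Pm) = s2"
    and g: "0 < g" and c: "c \<ge> g * sqrt s2"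
  shows "measure Pm {w \<in> space Pm. c < X w} \<le> 1 / (1 + g^2)"
proof -
  interpret prob_space Pm by (rule P)
  have mX[measurable]: "X \<in> borel_measurable Pm" using iX by (rule borel_measurable_integrable)
  have s0: "0 \<le> s2" unfolding m2[symmetric] by (intro integral_nonneg_AE) auto
  show ?thesis
  proof (cases "c > 0")
    case True
    have "g^2 * s2 \<le> c^2"
    proof -
      have "(g * sqrt s2)^2 \<le> c^2" using c g s0 by (intro power_mono) auto
      then show ?thesis using s0 by (simp add: power_mult_distrib)
    qed
    moreover have "s2 + c^2 > 0" using s0 True by (simp add: add_nonneg_pos)
    moreover have "1 + g^2 > 0" using zero_le_power2[of g] by linarith
    ultimately have "s2 / (s2 + c^2) \<le> 1 / (1 + g^2)"
      by (simp add: field_simps)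
    moreover have "measure Pm {w \<in> space Pm. c < X w} \<le> measure Pm {w \<in> space Pm. c \<le> X w}"
      by (rule finite_measure_mono) auto
    ultimately show ?thesis using cantelli[OF P iX iX2 m1 m2 True] by linarith
  next
    case False
    then have "g * sqrt s2 \<le> 0" using c by linarith
    then have "s2 = 0" using g s0 by (simp add: mult_le_0_iff)
    then have c0: "c = 0" using c False by simp
    have "measure Pm {w \<in> space Pm. 0 < X w} = 0"
      using ae_zero_of_m2[OF P iX2 _ mX] m2 \<open>s2 = 0\<close> by simp
    then show ?thesis using c0 by simp
  qed
qed

lemma gauss_tail_strict:
  assumes P: "prob_space Pm" and G: "centered_gaussian_rv Pm X s2" and p: "0 < p" "p < 1"
    and c: "c > std_normal_quantile p * sqrt s2"
  shows "measure Pm {w \<in> space Pm. c \<le> X w} \<le> 1 - p"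
proof -
  interpret prob_space Pm by (rule P)
  have mX[measurable]: "X \<in> borel_measurable Pm"
    using G unfolding centered_gaussian_rv_def by (auto dest: distributed_measurable)
  have "measure Pm {w \<in> space Pm. c \<le> X w} \<le> measure Pm {w \<in> space Pm. std_normal_quantile p * sqrt s2 < X w}"
    using c by (intro finite_measure_mono) auto
  then show ?thesis using gauss_tail[OF P G p] by linarith
qed

lemma gauss_tail_weak:
  assumes P: "prob_space Pm" and G: "centered_gaussian_rv Pm X s2" and p: "0 < p" "p < 1"
    and c: "c \<ge> std_normal_quantile p * sqrt s2"
  shows "measure Pm {w \<in> space Pm. c < X w} \<le> 1 - p"
proof -
  interpret prob_space Pm by (rule P)
  have mX[measurable]: "X \<in> borel_measurable Pm"
    using G unfolding centered_gaussian_rv_def by (auto dest: distributed_measurable)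
  have "measure Pm {w \<in> space Pm. c < X w} \<le> measure Pm {w \<in> space Pm. std_normal_quantile p * sqrt s2 < X w}"
    using c by (intro finite_measure_mono) auto
  then show ?thesis using gauss_tail[OF P G p] by linarith
qed

lemma moments_lin:
  fixes V :: "'w \<Rightarrow> nat \<Rightarrow> real^'d::finite" and z :: "nat \<Rightarrow> real^'d"
  assumes P: "prob_space Pm" and SM: "stacked_moments Pm V t N Sig"
  shows "integrable Pm (\<lambda>w. \<Sum>l\<in>{t..<t+N}. z l \<bullet> V w l) \<and>
         integrable Pm (\<lambda>w. (\<Sum>l\<in>{t..<t+N}. z l \<bullet> V w l)^2) \<and>
         (\<integral>w. (\<Sum>l\<in>{t..<t+N}. z l \<bullet> V w l) \<partial>Pm) = 0 \<and>
         (\<integral>w. (\<Sum>l\<in>{t..<t+N}. z l \<bullet> V w l)^2 \<partial>Pm) = (\<Sum>l\<in>{t..<t+N}. z l \<bullet> (Sig *v z l))"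
proof -
  define I where "I = {t..<t+N}"
  have fI: "finite I" unfolding I_def by simp
  have m1: "\<And>l a. l \<in> I \<Longrightarrow> integrable Pm (\<lambda>w. V w l $ a) \<and> (\<integral>w. V w l $ a \<partial>Pm) = 0"
    using SM unfolding stacked_moments_def I_def by blast
  have m2: "\<And>l l' a b. l \<in> I \<Longrightarrow> l' \<in> I \<Longrightarrow> integrable Pm (\<lambda>w. V w l $ a * V w l' $ b) \<and>
        (\<integral>w. V w l $ a * V w l' $ b \<partial>Pm) = (if l = l' then Sig $ a $ b else 0)"
    using SM unfolding stacked_moments_def I_def by blast
  have X: "(\<lambda>w. \<Sum>l\<in>I. z l \<bullet> V w l) = (\<lambda>w. \<Sum>l\<in>I. \<Sum>a\<in>UNIV. z l $ a * V w l $ a)"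
    by (simp add: inner_vec_def)
  have X2: "(\<lambda>w. (\<Sum>l\<in>I. z l \<bullet> V w l)^2) =
      (\<lambda>w. \<Sum>l\<in>I. \<Sum>l'\<in>I. \<Sum>a\<in>UNIV. \<Sum>b\<in>UNIV. (z l $ a * z l' $ b) * (V w l $ a * V w l' $ b))"
  proof
    fix w
    have "(\<Sum>l\<in>I. z l \<bullet> V w l)^2 = (\<Sum>l\<in>I. z l \<bullet> V w l) * (\<Sum>l'\<in>I. z l' \<bullet> V w l')"
      by (simp add: power2_eq_square)
    also have "\<dots> = (\<Sum>l\<in>I. \<Sum>l'\<in>I. (z l \<bullet> V w l) * (z l' \<bullet> V w l'))" by (rule sum_product)
    also have "\<dots> = (\<Sum>l\<in>I. \<Sum>l'\<in>I. \<Sum>a\<in>UNIV. \<Sum>b\<in>UNIV. (z l $ a * z l' $ b) * (V w l $ a * V w l' $ b))"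
      by (simp add: inner_vec_def sum_product mult_ac)
    finally show "(\<Sum>l\<in>I. z l \<bullet> V w l)^2 = (\<Sum>l\<in>I. \<Sum>l'\<in>I. \<Sum>a\<in>UNIV. \<Sum>b\<in>UNIV. (z l $ a * z l' $ b) * (V w l $ a * V w l' $ b))" .
  qed
  have i1: "integrable Pm (\<lambda>w. \<Sum>l\<in>I. z l \<bullet> V w l)"
    unfolding X
    apply (rule Bochner_Integration.integrable_sum)
    apply (rule Bochner_Integration.integrable_sum)
    apply (rule integrable_mult_right)
    using m1 by auto
  have e1: "(\<integral>w. (\<Sum>l\<in>I. z l \<bullet> V w l) \<partial>Pm) = 0"
    unfolding X using m1 by (simp add: integral_sum integrable_mult_right)
  have i2: "integrable Pm (\<lambda>w. (\<Sum>l\<in>I. z l \<bullet> V w l)^2)"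
    unfolding X2
    apply (rule Bochner_Integration.integrable_sum)+
    apply (rule integrable_mult_right)
    using m2 by auto
  have "(\<integral>w. (\<Sum>l\<in>I. z l \<bullet> V w l)^2 \<partial>Pm) =
      (\<Sum>l\<in>I. \<Sum>l'\<in>I. \<Sum>a\<in>UNIV. \<Sum>b\<in>UNIV. (z l $ a * z l' $ b) * (if l = l' then Sig $ a $ b else 0))"
    unfolding X2 using m2 by (simp add: integral_sum integrable_mult_right integrable_sum)
  also have "\<dots> = (\<Sum>l\<in>I. \<Sum>l'\<in>I. if l' = l then (\<Sum>a\<in>UNIV. \<Sum>b\<in>UNIV. (z l $ a * z l $ b) * Sig $ a $ b) else 0)"
    by (intro sum.cong refl) auto
  also have "\<dots> = (\<Sum>l\<in>I. \<Sum>a\<in>UNIV. \<Sum>b\<in>UNIV. (z l $ a * z l $ b) * Sig $ a $ b)"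
    using fI by simp
  also have "\<dots> = (\<Sum>l\<in>I. z l \<bullet> (Sig *v z l))"
    by (simp add: inner_vec_def matrix_vector_mult_def sum_distrib_left mult_ac)
  finally show ?thesis using i1 i2 e1 unfolding I_def by blast
qed

lemma union_bound:
  fixes Xa :: "nat \<Rightarrow> 'i \<Rightarrow> 'w \<Rightarrow> real" and Xb :: "nat \<Rightarrow> nat \<Rightarrow> 'w \<Rightarrow> real"
  assumes P: "prob_space Pm" and fK: "finite K" and fI: "finite Ii" and fJ: "finite Jj"
    and ma: "\<And>k i. k \<in> K \<Longrightarrow> i \<in> Ii \<Longrightarrow> Xa k i \<in> borel_measurable Pm"
    and mb: "\<And>k j. k \<in> K \<Longrightarrow> j \<in> Jj \<Longrightarrow> Xb k j \<in> borel_measurable Pm"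
    and ta: "\<And>k i. k \<in> K \<Longrightarrow> i \<in> Ii \<Longrightarrow> measure Pm {w \<in> space Pm. Ya k i \<le> Xa k i w} \<le> da"
    and tb: "\<And>k j. k \<in> K \<Longrightarrow> j \<in> Jj \<Longrightarrow> measure Pm {w \<in> space Pm. Yb k j < Xb k j w} \<le> db"
  shows "measure Pm {w \<in> space Pm. \<forall>k\<in>K. (\<forall>i\<in>Ii. Xa k i w < Ya k i) \<and> (\<forall>j\<in>Jj. Xb k j w \<le> Yb k j)}
     \<ge> 1 - (real (card K) * real (card Ii) * da + real (card K) * real (card Jj) * db)"
proof -
  interpret prob_space Pm by (rule P)
  define A where "A p = {w \<in> space Pm. Ya (fst p) (snd p) \<le> Xa (fst p) (snd p) w}" for p
  define B where "B p = {w \<in> space Pm. Yb (fst p) (snd p) < Xb (fst p) (snd p) w}" for p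
  have As: "A p \<in> sets Pm" if "p \<in> K \<times> Ii" for p
  proof -
    have [measurable]: "Xa (fst p) (snd p) \<in> borel_measurable Pm" using ma that by auto
    show ?thesis unfolding A_def by measurable
  qed
  have Bs: "B p \<in> sets Pm" if "p \<in> K \<times> Jj" for p
  proof -
    have [measurable]: "Xb (fst p) (snd p) \<in> borel_measurable Pm" using mb that by auto
    show ?thesis unfolding B_def by measurable
  qed
  define bad where "bad = (\<Union>p\<in>K \<times> Ii. A p) \<union> (\<Union>p\<in>K \<times> Jj. B p)"
  have bads: "bad \<in> sets Pm" unfolding bad_def using As Bs fK fI fJ
    by (intro sets.Un sets.finite_UN) auto
  have good: "{w \<in> space Pm. \<forall>k\<in>K. (\<forall>i\<in>Ii. Xa k i w < Ya k i) \<and> (\<forall>j\<in>Jj. Xb k j w \<le> Yb k j)}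
      = space Pm - bad"
    unfolding bad_def A_def B_def by (auto simp: not_less) (meson not_less)+
  have "measure Pm bad \<le> measure Pm (\<Union>p\<in>K \<times> Ii. A p) + measure Pm (\<Union>p\<in>K \<times> Jj. B p)"
    unfolding bad_def using As Bs fK fI fJ by (intro measure_subadditive sets.finite_UN emeasure_finite) auto
  also have "measure Pm (\<Union>p\<in>K \<times> Ii. A p) \<le> (\<Sum>p\<in>K \<times> Ii. measure Pm (A p))"
    using As fK fI by (intro finite_measure_subadditive_finite) auto
  also have "\<dots> \<le> (\<Sum>p\<in>K \<times> Ii. da)"
    using ta unfolding A_def by (intro sum_mono) auto
  also have "measure Pm (\<Union>p\<in>K \<times> Jj. B p) \<le> (\<Sum>p\<in>K \<times> Jj. measure Pm (B p))"
    using Bs fK fJ by (intro finite_measure_subadditive_finite) auto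
  also have "\<dots> \<le> (\<Sum>p\<in>K \<times> Jj. db)"
    using tb unfolding B_def by (intro sum_mono) auto
  finally have "measure Pm bad \<le> real (card K) * real (card Ii) * da + real (card K) * real (card Jj) * db"
    by (simp add: card_cartesian_product)
  moreover have "measure Pm (space Pm - bad) = 1 - measure Pm bad" by (rule prob_compl[OF bads])
  ultimately show ?thesis unfolding good by linarith
qed

lemma good_set:
  fixes S :: "('x::finite, 'u::finite, 'm::finite, 'e::finite) dyn"
    and P :: "('x, 'u, 'm) policy"
    and Gm :: "('x, 'n::finite, 'l::finite, 'm) geo"
    and V :: "'w \<Rightarrow> nat \<Rightarrow> real^('x + 'm \<times> 'e)"
  assumes DF: "\<forall>k\<in>{t..<t+N}. \<forall>i. dual_feas Gm lam nu i (Suc k)"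
  shows "{w \<in> space Pm. CA S P Gm t N lam nu (V w) \<and> XU S P Fx Fu f J t N (V w)} =
    {w \<in> space Pm. \<forall>k\<in>{t..<t+N}.
       (\<forall>i\<in>UNIV. (\<lambda>k i w. \<Sum>l\<in>{t..<t+N}. Zca S P Gm t N lam i (Suc k) l \<bullet> V w l) k i w
                   < (\<lambda>k i. Yca S P Gm t lam nu i (Suc k)) k i) \<and>
       (\<forall>j\<in>{1..J}. (\<lambda>k j w. \<Sum>l\<in>{t..<t+N}. Zxu S P Fx Fu t N j k l \<bullet> V w l) k j w
                   \<le> (\<lambda>k j. Yxu S P Fx Fu f t j k) k j)}"
  using DF unfolding CA_iff XU_iff Suc_range by auto

lemma card_pos_m: "0 < real CARD('m::finite)" by simp

lemma part2:
  fixes S :: "('x::finite, 'u::finite, 'm::finite, 'e::finite) dyn"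
    and P :: "('x, 'u, 'm) policy"
    and Gm :: "('x, 'n::finite, 'l::finite, 'm) geo"
    and Sig :: "real^('x + 'm \<times> 'e)^('x + 'm \<times> 'e)"
    and V :: "'w \<Rightarrow> nat \<Rightarrow> real^('x + 'm \<times> 'e)"
  assumes N: "N \<ge> 1" and J: "J \<ge> 1"
    and H: "psd Sig \<and> 0 < \<epsilon> \<and> \<epsilon> < 1 \<and> prob_space Pm \<and> stacked_gaussian Pm V t N Sig \<and>
     (\<forall>k\<in>{t..<t+N}.
         (\<forall>i. dual_feas Gm lam nu i (Suc k) \<and>
              Yca S P Gm t lam nu i (Suc k) >
                std_normal_quantile (1 - \<epsilon> / (2 * real N * real CARD('m)))
                * norm2_kron_sqrt Sig t N (Zca S P Gm t N lam i (Suc k))) \<and>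
         (\<forall>j\<in>{1..J}. Yxu S P Fx Fu f t j k \<ge>
                std_normal_quantile (1 - \<epsilon> / (2 * real N * real J))
                * norm2_kron_sqrt Sig t N (Zxu S P Fx Fu t N j k)))"
  shows "measure Pm {w \<in> space Pm. CA S P Gm t N lam nu (V w) \<and> XU S P Fx Fu f J t N (V w)} \<ge> 1 - \<epsilon>"
proof -
  have psd: "psd Sig" and e: "0 < \<epsilon>" "\<epsilon> < 1" and Pr: "prob_space Pm"
    and SG: "stacked_gaussian Pm V t N Sig" using H by auto
  have C: "\<forall>k\<in>{t..<t+N}.
         (\<forall>i. dual_feas Gm lam nu i (Suc k) \<and>
              Yca S P Gm t lam nu i (Suc k) >
                std_normal_quantile (1 - \<epsilon> / (2 * real N * real CARD('m)))
                * norm2_kron_sqrt Sig t N (Zca S P Gm t N lam i (Suc k))) \<and>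
         (\<forall>j\<in>{1..J}. Yxu S P Fx Fu f t j k \<ge>
                std_normal_quantile (1 - \<epsilon> / (2 * real N * real J))
                * norm2_kron_sqrt Sig t N (Zxu S P Fx Fu t N j k))" using H by blast
  define M where "M = real CARD('m)"
  have M1: "M \<ge> 1" unfolding M_def by simp
  have N1: "real N \<ge> 1" using N by simp
  have J1: "real J \<ge> 1" using J by simp
  have gauss: "\<And>z. centered_gaussian_rv Pm (\<lambda>w. \<Sum>l\<in>{t..<t+N}. z l \<bullet> V w l) (\<Sum>l\<in>{t..<t+N}. z l \<bullet> (Sig *v z l))"
    using SG unfolding stacked_gaussian_def by blast
  have nrm: "\<And>z. norm2_kron_sqrt Sig t N z = sqrt (\<Sum>l\<in>{t..<t+N}. z l \<bullet> (Sig *v z l))"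
    unfolding norm2_kron_sqrt_def using norm_sqrt_quad[OF psd] by simp
  have meas: "(\<lambda>w. \<Sum>l\<in>{t..<t+N}. z l \<bullet> V w l) \<in> borel_measurable Pm" for z
    using gauss[of z] unfolding centered_gaussian_rv_def by (auto dest: distributed_measurable)
  define da where "da = \<epsilon> / (2 * real N * M)"
  define db where "db = \<epsilon> / (2 * real N * real J)"
  have NM: "2 * real N * M \<ge> 2"
  proof -
    have "real N * M \<ge> 1 * 1" by (rule mult_mono) (use N1 M1 in auto)
    then show ?thesis by linarith
  qed
  have NJ: "2 * real N * real J \<ge> 2"
  proof -
    have "real N * real J \<ge> 1 * 1" by (rule mult_mono) (use N1 J1 in auto)
    then show ?thesis by linarith
  qed
  have pa: "0 < 1 - da" "1 - da < 1"
  proof -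
    have pos: "0 < 2 * real N * M" using NM by linarith
    have "da < 1" unfolding da_def using NM e by (subst divide_less_eq_1_pos[OF pos]) linarith
    moreover have "0 < da" unfolding da_def using divide_pos_pos[OF e(1) pos] .
    ultimately show "0 < 1 - da" "1 - da < 1" by simp_all
  qed
  have pb: "0 < 1 - db" "1 - db < 1"
  proof -
    have pos: "0 < 2 * real N * real J" using NJ by linarith
    have "db < 1" unfolding db_def using NJ e by (subst divide_less_eq_1_pos[OF pos]) linarith
    moreover have "0 < db" unfolding db_def using divide_pos_pos[OF e(1) pos] .
    ultimately show "0 < 1 - db" "1 - db < 1" by simp_all
  qed
  have DF: "\<forall>k\<in>{t..<t+N}. \<forall>i. dual_feas Gm lam nu i (Suc k)" using C by blast
  have "measure Pm {w \<in> space Pm. \<forall>k\<in>{t..<t+N}.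
       (\<forall>i\<in>UNIV. (\<lambda>k i w. \<Sum>l\<in>{t..<t+N}. Zca S P Gm t N lam i (Suc k) l \<bullet> V w l) k i w
                   < (\<lambda>k i. Yca S P Gm t lam nu i (Suc k)) k i) \<and>
       (\<forall>j\<in>{1..J}. (\<lambda>k j w. \<Sum>l\<in>{t..<t+N}. Zxu S P Fx Fu t N j k l \<bullet> V w l) k j w
                   \<le> (\<lambda>k j. Yxu S P Fx Fu f t j k) k j)}
     \<ge> 1 - (real (card {t..<t+N}) * real (card (UNIV::'m set)) * da + real (card {t..<t+N}) * real (card {1..J}) * db)"
  proof (rule union_bound[OF Pr])
    fix k i assume "k \<in> {t..<t+N}" "i \<in> (UNIV::'m set)"
    have "measure Pm {w \<in> space Pm. Yca S P Gm t lam nu i (Suc k) \<le> (\<Sum>l\<in>{t..<t+N}. Zca S P Gm t N lam i (Suc k) l \<bullet> V w l)}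
       \<le> 1 - (1 - da)"
    proof (rule gauss_tail_strict[OF Pr gauss pa])
      show "std_normal_quantile (1 - da) * sqrt (\<Sum>l = t..<t + N. Zca S P Gm t N lam i (Suc k) l \<bullet> (Sig *v Zca S P Gm t N lam i (Suc k) l))
          < Yca S P Gm t lam nu i (Suc k)"
        using \<open>k \<in> _\<close> C unfolding da_def M_def nrm by blast
    qed
    then show "measure Pm {w \<in> space Pm. (\<lambda>k i. Yca S P Gm t lam nu i (Suc k)) k i \<le> (\<lambda>k i w. \<Sum>l\<in>{t..<t+N}. Zca S P Gm t N lam i (Suc k) l \<bullet> V w l) k i w} \<le> da"
      by simp
  next
    fix k j assume "k \<in> {t..<t+N}" "j \<in> {1..J}"
    have "measure Pm {w \<in> space Pm. Yxu S P Fx Fu f t j k < (\<Sum>l\<in>{t..<t+N}. Zxu S P Fx Fu t N j k l \<bullet> V w l)}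
       \<le> 1 - (1 - db)"
    proof (rule gauss_tail_weak[OF Pr gauss pb])
      show "std_normal_quantile (1 - db) * sqrt (\<Sum>l = t..<t + N. Zxu S P Fx Fu t N j k l \<bullet> (Sig *v Zxu S P Fx Fu t N j k l))
          \<le> Yxu S P Fx Fu f t j k"
        using \<open>k \<in> _\<close> \<open>j \<in> _\<close> C unfolding db_def nrm by blast
    qed
    then show "measure Pm {w \<in> space Pm. (\<lambda>k j. Yxu S P Fx Fu f t j k) k j < (\<lambda>k j w. \<Sum>l\<in>{t..<t+N}. Zxu S P Fx Fu t N j k l \<bullet> V w l) k j w} \<le> db"
      by simp
  qed (use meas in auto)
  moreover have "real (card {t..<t+N}) * real (card (UNIV::'m set)) * da + real (card {t..<t+N}) * real (card {1..J}) * db = \<epsilon>"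
  proof -
    have "real (card {t..<t+N}) * real (card (UNIV::'m set)) * da = \<epsilon> / 2"
      unfolding da_def M_def using NM N by (simp add: field_simps)
    moreover have "real (card {t..<t+N}) * real (card {1..J}) * db = \<epsilon> / 2"
      unfolding db_def using NJ N J by (simp add: field_simps)
    ultimately show ?thesis by simp
  qed
  ultimately show ?thesis unfolding good_set[OF DF] by simp
qed

lemma part3:
  fixes S :: "('x::finite, 'u::finite, 'm::finite, 'e::finite) dyn"
    and P :: "('x, 'u, 'm) policy"
    and Gm :: "('x, 'n::finite, 'l::finite, 'm) geo"
    and Sig :: "real^('x + 'm \<times> 'e)^('x + 'm \<times> 'e)"
    and V :: "'w \<Rightarrow> nat \<Rightarrow> real^('x + 'm \<times> 'e)"
  assumes N: "N \<ge> 1" and J: "J \<ge> 1"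
    and H: "psd Sig \<and> 0 < \<epsilon> \<and> \<epsilon> < 1 \<and> prob_space Pm \<and> stacked_moments Pm V t N Sig \<and>
     (\<forall>k\<in>{t..<t+N}.
         (\<forall>i. dual_feas Gm lam nu i (Suc k) \<and>
              Yca S P Gm t lam nu i (Suc k) >
                sqrt ((2 * real N * real CARD('m) - \<epsilon>) / \<epsilon>)
                * norm2_kron_sqrt Sig t N (Zca S P Gm t N lam i (Suc k))) \<and>
         (\<forall>j\<in>{1..J}. Yxu S P Fx Fu f t j k \<ge>
                sqrt ((2 * real N * real J - \<epsilon>) / \<epsilon>)
                * norm2_kron_sqrt Sig t N (Zxu S P Fx Fu t N j k)))"
  shows "measure Pm {w \<in> space Pm. CA S P Gm t N lam nu (V w) \<and> XU S P Fx Fu f J t N (V w)} \<ge> 1 - \<epsilon>"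
proof -
  have psd: "psd Sig" and e: "0 < \<epsilon>" "\<epsilon> < 1" and Pr: "prob_space Pm"
    and SM: "stacked_moments Pm V t N Sig" using H by auto
  have C: "\<forall>k\<in>{t..<t+N}.
         (\<forall>i. dual_feas Gm lam nu i (Suc k) \<and>
              Yca S P Gm t lam nu i (Suc k) >
                sqrt ((2 * real N * real CARD('m) - \<epsilon>) / \<epsilon>)
                * norm2_kron_sqrt Sig t N (Zca S P Gm t N lam i (Suc k))) \<and>
         (\<forall>j\<in>{1..J}. Yxu S P Fx Fu f t j k \<ge>
                sqrt ((2 * real N * real J - \<epsilon>) / \<epsilon>)
                * norm2_kron_sqrt Sig t N (Zxu S P Fx Fu t N j k))" using H by blast
  define M where "M = real CARD('m)"
  have M1: "M \<ge> 1" unfolding M_def by simp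
  have N1: "real N \<ge> 1" using N by simp
  have J1: "real J \<ge> 1" using J by simp
  note mom = moments_lin[OF Pr SM]
  have nrm: "\<And>z. norm2_kron_sqrt Sig t N z = sqrt (\<Sum>l\<in>{t..<t+N}. z l \<bullet> (Sig *v z l))"
    unfolding norm2_kron_sqrt_def using norm_sqrt_quad[OF psd] by simp
  have meas: "(\<lambda>w. \<Sum>l\<in>{t..<t+N}. z l \<bullet> V w l) \<in> borel_measurable Pm" for z
    using mom[of z] by (auto intro: borel_measurable_integrable)
  define da where "da = \<epsilon> / (2 * real N * M)"
  define db where "db = \<epsilon> / (2 * real N * real J)"
  have NM: "2 * real N * M \<ge> 2"
  proof -
    have "real N * M \<ge> 1 * 1" by (rule mult_mono) (use N1 M1 in auto)
    then show ?thesis by linarith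
  qed
  have NJ: "2 * real N * real J \<ge> 2"
  proof -
    have "real N * real J \<ge> 1 * 1" by (rule mult_mono) (use N1 J1 in auto)
    then show ?thesis by linarith
  qed
  have pa: "0 < 1 - da" "1 - da < 1"
  proof -
    have pos: "0 < 2 * real N * M" using NM by linarith
    have "da < 1" unfolding da_def using NM e by (subst divide_less_eq_1_pos[OF pos]) linarith
    moreover have "0 < da" unfolding da_def using divide_pos_pos[OF e(1) pos] .
    ultimately show "0 < 1 - da" "1 - da < 1" by simp_all
  qed
  have pb: "0 < 1 - db" "1 - db < 1"
  proof -
    have pos: "0 < 2 * real N * real J" using NJ by linarith
    have "db < 1" unfolding db_def using NJ e by (subst divide_less_eq_1_pos[OF pos]) linarith
    moreover have "0 < db" unfolding db_def using divide_pos_pos[OF e(1) pos] .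
    ultimately show "0 < 1 - db" "1 - db < 1" by simp_all
  qed
  define ga where "ga = sqrt ((2 * real N * M - \<epsilon>) / \<epsilon>)"
  define gb where "gb = sqrt ((2 * real N * real J - \<epsilon>) / \<epsilon>)"
  have gap: "0 < ga" unfolding ga_def using NM e by (simp add: divide_pos_pos)
  have gbp: "0 < gb" unfolding gb_def using NJ e by (simp add: divide_pos_pos)
  have gaeq: "1 / (1 + ga^2) = da"
  proof -
    have "ga^2 = (2 * real N * M - \<epsilon>) / \<epsilon>" unfolding ga_def using NM e by simp
    then have "1 + ga^2 = (2 * real N * M) / \<epsilon>" using e by (simp add: field_simps)
    then show ?thesis unfolding da_def by simp
  qed
  have gbeq: "1 / (1 + gb^2) = db"
  proof -
    have "gb^2 = (2 * real N * real J - \<epsilon>) / \<epsilon>" unfolding gb_def using NJ e by simp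
    then have "1 + gb^2 = (2 * real N * real J) / \<epsilon>" using e by (simp add: field_simps)
    then show ?thesis unfolding db_def by simp
  qed
  have DF: "\<forall>k\<in>{t..<t+N}. \<forall>i. dual_feas Gm lam nu i (Suc k)" using C by blast
  have "measure Pm {w \<in> space Pm. \<forall>k\<in>{t..<t+N}.
       (\<forall>i\<in>UNIV. (\<lambda>k i w. \<Sum>l\<in>{t..<t+N}. Zca S P Gm t N lam i (Suc k) l \<bullet> V w l) k i w
                   < (\<lambda>k i. Yca S P Gm t lam nu i (Suc k)) k i) \<and>
       (\<forall>j\<in>{1..J}. (\<lambda>k j w. \<Sum>l\<in>{t..<t+N}. Zxu S P Fx Fu t N j k l \<bullet> V w l) k j w
                   \<le> (\<lambda>k j. Yxu S P Fx Fu f t j k) k j)}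
     \<ge> 1 - (real (card {t..<t+N}) * real (card (UNIV::'m set)) * da + real (card {t..<t+N}) * real (card {1..J}) * db)"
  proof (rule union_bound[OF Pr])
    fix k i assume "k \<in> {t..<t+N}" "i \<in> (UNIV::'m set)"
    have "measure Pm {w \<in> space Pm. Yca S P Gm t lam nu i (Suc k) \<le> (\<Sum>l\<in>{t..<t+N}. Zca S P Gm t N lam i (Suc k) l \<bullet> V w l)}
       \<le> 1 / (1 + ga^2)"
    proof (rule dr_tail_strict[OF Pr _ _ _ _ gap])
      show "ga * sqrt (\<Sum>l = t..<t + N. Zca S P Gm t N lam i (Suc k) l \<bullet> (Sig *v Zca S P Gm t N lam i (Suc k) l))
          < Yca S P Gm t lam nu i (Suc k)"
        using \<open>k \<in> _\<close> C unfolding ga_def M_def nrm by blast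
    qed (use mom in blast)+
    then show "measure Pm {w \<in> space Pm. (\<lambda>k i. Yca S P Gm t lam nu i (Suc k)) k i \<le> (\<lambda>k i w. \<Sum>l\<in>{t..<t+N}. Zca S P Gm t N lam i (Suc k) l \<bullet> V w l) k i w} \<le> da"
      using gaeq by simp
  next
    fix k j assume "k \<in> {t..<t+N}" "j \<in> {1..J}"
    have "measure Pm {w \<in> space Pm. Yxu S P Fx Fu f t j k < (\<Sum>l\<in>{t..<t+N}. Zxu S P Fx Fu t N j k l \<bullet> V w l)}
       \<le> 1 / (1 + gb^2)"
    proof (rule dr_tail_weak[OF Pr _ _ _ _ gbp])
      show "gb * sqrt (\<Sum>l = t..<t + N. Zxu S P Fx Fu t N j k l \<bullet> (Sig *v Zxu S P Fx Fu t N j k l))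
          \<le> Yxu S P Fx Fu f t j k"
        using \<open>k \<in> _\<close> \<open>j \<in> _\<close> C unfolding gb_def nrm by blast
    qed (use mom in blast)+
    then show "measure Pm {w \<in> space Pm. (\<lambda>k j. Yxu S P Fx Fu f t j k) k j < (\<lambda>k j w. \<Sum>l\<in>{t..<t+N}. Zxu S P Fx Fu t N j k l \<bullet> V w l) k j w} \<le> db"
      using gbeq by simp
  qed (use meas in auto)
  moreover have "real (card {t..<t+N}) * real (card (UNIV::'m set)) * da + real (card {t..<t+N}) * real (card {1..J}) * db = \<epsilon>"
  proof -
    have "real (card {t..<t+N}) * real (card (UNIV::'m set)) * da = \<epsilon> / 2"
      unfolding da_def M_def using NM N by (simp add: field_simps)
    moreover have "real (card {t..<t+N}) * real (card {1..J}) * db = \<epsilon> / 2"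
      unfolding db_def using NJ N J by (simp add: field_simps)
    ultimately show ?thesis by simp
  qed
  ultimately show ?thesis unfolding good_set[OF DF] by simp
qed

theorem theorem1:
  fixes S :: "('x::finite, 'u::finite, 'm::finite, 'e::finite) dyn"
    and P :: "('x, 'u, 'm) policy"
    and Gm :: "('x, 'n::finite, 'l::finite, 'm) geo"
    and Fx :: "nat \<Rightarrow> real^'x" and Fu :: "nat \<Rightarrow> real^'u" and f :: "nat \<Rightarrow> real"
    and N J t :: nat
    and lam nu :: "'m \<Rightarrow> nat \<Rightarrow> real^'l"
  assumes N: "N \<ge> 1" and J: "J \<ge> 1"
    and cone: "closed (gK Gm)" "convex (gK Gm)" "cone (gK Gm)" "interior (gK Gm) \<noteq> {}"
    and rot: "\<And>k. rotation_matrix (gR Gm k)" "\<And>i k. rotation_matrix (gRi Gm i k)"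
  shows
  \<comment> \<open>1) robust reformulation under the polytopic noise set\<close>
  "(\<forall>(Gam :: real^('x + 'm \<times> 'e)^('x + 'm \<times> 'e)) (\<gamma>::real). invertible Gam \<and> \<gamma> > 0 \<longrightarrow>
     ((\<forall>V. (\<forall>l\<in>{t..<t+N}. infnorm (Gam *v V l) \<le> \<gamma>) \<longrightarrow>
            CA S P Gm t N lam nu V \<and> XU S P Fx Fu f J t N V)
      \<longleftrightarrow>
      (\<forall>k\<in>{t..<t+N}.
         (\<forall>i. dual_feas Gm lam nu i (Suc k) \<and>
              Yca S P Gm t lam nu i (Suc k) > \<gamma> * norm1_kron_inv Gam t N (Zca S P Gm t N lam i (Suc k))) \<and>
         (\<forall>j\<in>{1..J}. Yxu S P Fx Fu f t j k - \<gamma> * norm1_kron_inv Gam t N (Zxu S P Fx Fu t N j k) \<ge> 0))))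
   \<and>
  \<comment> \<open>2) Gaussian noise\<close>
   (\<forall>(Sig :: real^('x + 'm \<times> 'e)^('x + 'm \<times> 'e)) \<epsilon> (Pm :: 'w measure) V.
     psd Sig \<and> 0 < \<epsilon> \<and> \<epsilon> < 1 \<and> prob_space Pm \<and> stacked_gaussian Pm V t N Sig \<and>
     (\<forall>k\<in>{t..<t+N}.
         (\<forall>i. dual_feas Gm lam nu i (Suc k) \<and>
              Yca S P Gm t lam nu i (Suc k) >
                std_normal_quantile (1 - \<epsilon> / (2 * real N * real CARD('m)))
                * norm2_kron_sqrt Sig t N (Zca S P Gm t N lam i (Suc k))) \<and>
         (\<forall>j\<in>{1..J}. Yxu S P Fx Fu f t j k \<ge>
                std_normal_quantile (1 - \<epsilon> / (2 * real N * real J))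
                * norm2_kron_sqrt Sig t N (Zxu S P Fx Fu t N j k)))
     \<longrightarrow> measure Pm {w \<in> space Pm. CA S P Gm t N lam nu (V w) \<and> XU S P Fx Fu f J t N (V w)} \<ge> 1 - \<epsilon>)
   \<and>
  \<comment> \<open>3) distributionally robust: any noise with mean 0 and covariance I_N \<otimes> Sigma\<close>
   (\<forall>(Sig :: real^('x + 'm \<times> 'e)^('x + 'm \<times> 'e)) \<epsilon> (Pm :: 'v measure) V.
     psd Sig \<and> 0 < \<epsilon> \<and> \<epsilon> < 1 \<and> prob_space Pm \<and> stacked_moments Pm V t N Sig \<and>
     (\<forall>k\<in>{t..<t+N}.
         (\<forall>i. dual_feas Gm lam nu i (Suc k) \<and>
              Yca S P Gm t lam nu i (Suc k) >
                sqrt ((2 * real N * real CARD('m) - \<epsilon>) / \<epsilon>)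
                * norm2_kron_sqrt Sig t N (Zca S P Gm t N lam i (Suc k))) \<and>
         (\<forall>j\<in>{1..J}. Yxu S P Fx Fu f t j k \<ge>
                sqrt ((2 * real N * real J - \<epsilon>) / \<epsilon>)
                * norm2_kron_sqrt Sig t N (Zxu S P Fx Fu t N j k)))
     \<longrightarrow> measure Pm {w \<in> space Pm. CA S P Gm t N lam nu (V w) \<and> XU S P Fx Fu f J t N (V w)} \<ge> 1 - \<epsilon>)"
  proof (intro conjI)
  show "\<forall>(Gam :: real^('x + 'm \<times> 'e)^('x + 'm \<times> 'e)) (\<gamma>::real). invertible Gam \<and> \<gamma> > 0 \<longrightarrow>
     ((\<forall>V. (\<forall>l\<in>{t..<t+N}. infnorm (Gam *v V l) \<le> \<gamma>) \<longrightarrow>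
            CA S P Gm t N lam nu V \<and> XU S P Fx Fu f J t N V)
      \<longleftrightarrow>
      (\<forall>k\<in>{t..<t+N}.
         (\<forall>i. dual_feas Gm lam nu i (Suc k) \<and>
              Yca S P Gm t lam nu i (Suc k) > \<gamma> * norm1_kron_inv Gam t N (Zca S P Gm t N lam i (Suc k))) \<and>
         (\<forall>j\<in>{1..J}. Yxu S P Fx Fu f t j k - \<gamma> * norm1_kron_inv Gam t N (Zxu S P Fx Fu t N j k) \<ge> 0)))"
  proof (intro allI impI)
    fix Gam :: "real^('x + 'm \<times> 'e)^('x + 'm \<times> 'e)" and \<gamma> :: real
    assume h: "invertible Gam \<and> \<gamma> > 0"
    show "(\<forall>V. (\<forall>l\<in>{t..<t+N}. infnorm (Gam *v V l) \<le> \<gamma>) \<longrightarrow>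
            CA S P Gm t N lam nu V \<and> XU S P Fx Fu f J t N V)
      \<longleftrightarrow>
      (\<forall>k\<in>{t..<t+N}.
         (\<forall>i. dual_feas Gm lam nu i (Suc k) \<and>
              Yca S P Gm t lam nu i (Suc k) > \<gamma> * norm1_kron_inv Gam t N (Zca S P Gm t N lam i (Suc k))) \<and>
         (\<forall>j\<in>{1..J}. Yxu S P Fx Fu f t j k - \<gamma> * norm1_kron_inv Gam t N (Zxu S P Fx Fu t N j k) \<ge> 0))"
      using part1[of Gam \<gamma> t N S P Gm lam nu Fx Fu f J] h by blast
  qed
next
  show "\<forall>(Sig :: real^('x + 'm \<times> 'e)^('x + 'm \<times> 'e)) \<epsilon> (Pm :: 'w measure) V.
     psd Sig \<and> 0 < \<epsilon> \<and> \<epsilon> < 1 \<and> prob_space Pm \<and> stacked_gaussian Pm V t N Sig \<and>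
     (\<forall>k\<in>{t..<t+N}.
         (\<forall>i. dual_feas Gm lam nu i (Suc k) \<and>
              Yca S P Gm t lam nu i (Suc k) >
                std_normal_quantile (1 - \<epsilon> / (2 * real N * real CARD('m)))
                * norm2_kron_sqrt Sig t N (Zca S P Gm t N lam i (Suc k))) \<and>
         (\<forall>j\<in>{1..J}. Yxu S P Fx Fu f t j k \<ge>
                std_normal_quantile (1 - \<epsilon> / (2 * real N * real J))
                * norm2_kron_sqrt Sig t N (Zxu S P Fx Fu t N j k)))
     \<longrightarrow> measure Pm {w \<in> space Pm. CA S P Gm t N lam nu (V w) \<and> XU S P Fx Fu f J t N (V w)} \<ge> 1 - \<epsilon>"
    using part2[OF N J] by blast
next
  show "\<forall>(Sig :: real^('x + 'm \<times> 'e)^('x + 'm \<times> 'e)) \<epsilon> (Pm :: 'v measure) V.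
     psd Sig \<and> 0 < \<epsilon> \<and> \<epsilon> < 1 \<and> prob_space Pm \<and> stacked_moments Pm V t N Sig \<and>
     (\<forall>k\<in>{t..<t+N}.
         (\<forall>i. dual_feas Gm lam nu i (Suc k) \<and>
              Yca S P Gm t lam nu i (Suc k) >
                sqrt ((2 * real N * real CARD('m) - \<epsilon>) / \<epsilon>)
                * norm2_kron_sqrt Sig t N (Zca S P Gm t N lam i (Suc k))) \<and>
         (\<forall>j\<in>{1..J}. Yxu S P Fx Fu f t j k \<ge>
                sqrt ((2 * real N * real J - \<epsilon>) / \<epsilon>)
                * norm2_kron_sqrt Sig t N (Zxu S P Fx Fu t N j k)))
     \<longrightarrow> measure Pm {w \<in> space Pm. CA S P Gm t N lam nu (V w) \<and> XU S P Fx Fu f J t N (V w)} \<ge> 1 - \<epsilon>"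
    using part3[OF N J] by blast
qed

end
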